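(* Consider the quantum walk on the half line induced by the birth–death chain with parameters $(p_j,q_j,r_j)_{j\ge0}$, and assume the chain is positive recurrent, i.e. $C_R<\infty$. Define $$\pi(j)=\frac{1}{1+C_R}\Big\{\delta_0(j)+(1-\delta_0(j))\frac{p_0\cdots p_{j-1}}{q_1\cdots q_j}\Big\},\quad j\ge0.$$ Then for every $j\ge0$ and every unit vector $\Psi_0=\sum_{k\ge0:|k-j|\le1}\alpha_k\delta_{(k,j)}\in\ell^2(A)$, and every $i\ge0$, $$\overline{\mu}^{(\Psi_0)}_\infty(i)\ \ge\ |\langle a_j,\Psi_0\rangle|^2\,\pi(i)\,\pi(j).$$ In particular, for $\Psi_0=a_j$ one has $\overline{\mu}^{(\Psi_0)}_\infty(i)>0$ for all $i$ (localization).
   Context: Half-line setting: $V=\mathbb{Z}_+=\{0,1,2,\dots\}$, with parameters $p_j,q_j,r_j\ge0$, $p_j+q_j+r_j=1$, $q_0=0$, $p_j>0$ for $j\ge0$, $q_j>0$ for $j\ge1$; from $j$ the walker moves to $j+1$, $j-1$, $j$ with probabilities $p_j,q_j,r_j$. The arc set $A$ consists of $(j+1,j)$ for $j\ge0$ (denoted $|j;R\rangle$), $(j-1,j)$ for $j\ge1$ (denoted $|j;L\rangle$), and the self loop arc $(j,j)$ whenever $r_j>0$ (denoted $|j;O\rangle$); arc $(u,v)$ goes from $v$ to $u$. The shift $S$ on $\ell^2(A)$ swaps $\delta_{(u,v)}\leftrightarrow\delta_{(v,u)}$, i.e. $|j;R\rangle\leftrightarrow|j+1;L\rangle$ and fixes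 $|j;O\rangle$. $a_j=\sqrt{q_j}|j;L\rangle+\sqrt{r_j}|j;O\rangle+\sqrt{p_j}|j;R\rangle$ (terms with zero coefficient omitted). $\Pi_A$ is the orthogonal projection onto the closed span of $\{a_j\}$, $C=2\Pi_A-I$, $U=SC$. For a unit $\Psi_0\in\ell^2(A)$, $P(X_t=i)=\sum_{J}|\langle i;J|U^t\Psi_0\rangle|^2$ (sum over the arcs out of $i$) and $\overline{\mu}^{(\Psi_0)}_\infty(i)=\lim_{T\to\infty}\frac1T\sum_{t=0}^{T-1}P(X_t=i)$. $C_R=\sum_{j\ge1}\frac{p_0\cdots p_{j-1}}{q_1\cdots q_j}$. *)

theory Defs
  imports "HOL-Analysis.Analysis"
begin

text \<open>Arcs of the half-line graph. Rarc j = (j+1,j) = |j;R>, Larc j = (j-1,j) = |j;L>,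
  Oarc j = (j,j) = |j;O>. An arc (u,v) goes from v to u, so each of these arcs has origin j.\<close>
datatype arc = Rarc nat | Larc nat | Oarc nat

fun origin :: "arc \<Rightarrow> nat" where
  "origin (Rarc j) = j" | "origin (Larc j) = j" | "origin (Oarc j) = j"

fun inA :: "(nat \<Rightarrow> real) \<Rightarrow> arc \<Rightarrow> bool" where
  "inA r (Rarc j) = True" | "inA r (Larc j) = (1 \<le> j)" | "inA r (Oarc j) = (0 < r j)"

definition in_l2 :: "(nat \<Rightarrow> real) \<Rightarrow> (arc \<Rightarrow> complex) \<Rightarrow> bool" where
  "in_l2 r f \<longleftrightarrow> (\<forall>a. \<not> inA r a \<longrightarrow> f a = 0) \<and> (\<lambda>a. (cmod (f a))^2) summable_on UNIV"

definition l2_inner :: "(arc \<Rightarrow> complex) \<Rightarrow> (arc \<Rightarrow> complex) \<Rightarrow> complex" where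
  "l2_inner f g = infsum (\<lambda>a. cnj (f a) * g a) UNIV"

definition l2_norm :: "(arc \<Rightarrow> complex) \<Rightarrow> real" where
  "l2_norm f = sqrt (infsum (\<lambda>a. (cmod (f a))^2) UNIV)"

fun coef :: "(nat \<Rightarrow> real) \<Rightarrow> (nat \<Rightarrow> real) \<Rightarrow> (nat \<Rightarrow> real) \<Rightarrow> arc \<Rightarrow> real" where
  "coef p q r (Rarc j) = sqrt (p j)"
| "coef p q r (Larc j) = sqrt (q j)"
| "coef p q r (Oarc j) = sqrt (r j)"

text \<open>a_j = sqrt q_j |j;L> + sqrt r_j |j;O> + sqrt p_j |j;R> (only arcs of A).\<close>
definition avec :: "(nat \<Rightarrow> real) \<Rightarrow> (nat \<Rightarrow> real) \<Rightarrow> (nat \<Rightarrow> real) \<Rightarrow> nat \<Rightarrow> arc \<Rightarrow> complex" where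
  "avec p q r j = (\<lambda>a. if origin a = j \<and> inA r a then complex_of_real (coef p q r a) else 0)"

definition closed_span_a :: "(nat \<Rightarrow> real) \<Rightarrow> (nat \<Rightarrow> real) \<Rightarrow> (nat \<Rightarrow> real) \<Rightarrow> (arc \<Rightarrow> complex) set" where
  "closed_span_a p q r = {\<phi>. in_l2 r \<phi> \<and>
     (\<forall>e>0. \<exists>F c. finite F \<and> l2_norm (\<lambda>a. \<phi> a - (\<Sum>j\<in>F. c j * avec p q r j a)) < e)}"

definition projA :: "(nat \<Rightarrow> real) \<Rightarrow> (nat \<Rightarrow> real) \<Rightarrow> (nat \<Rightarrow> real) \<Rightarrow> (arc \<Rightarrow> complex) \<Rightarrow> (arc \<Rightarrow> complex)" where
  "projA p q r \<psi> = (THE \<phi>. \<phi> \<in> closed_span_a p q r \<and>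
      (\<forall>v\<in>closed_span_a p q r. l2_inner v (\<lambda>a. \<psi> a - \<phi> a) = 0))"

definition coin :: "(nat \<Rightarrow> real) \<Rightarrow> (nat \<Rightarrow> real) \<Rightarrow> (nat \<Rightarrow> real) \<Rightarrow> (arc \<Rightarrow> complex) \<Rightarrow> (arc \<Rightarrow> complex)" where
  "coin p q r \<psi> = (\<lambda>a. 2 * projA p q r \<psi> a - \<psi> a)"

fun shift :: "(arc \<Rightarrow> complex) \<Rightarrow> arc \<Rightarrow> complex" where
  "shift \<psi> (Rarc j) = \<psi> (Larc (Suc j))"
| "shift \<psi> (Larc (Suc j)) = \<psi> (Rarc j)"
| "shift \<psi> (Larc 0) = 0"
| "shift \<psi> (Oarc j) = \<psi> (Oarc j)"

definition Uop :: "(nat \<Rightarrow> real) \<Rightarrow> (nat \<Rightarrow> real) \<Rightarrow> (nat \<Rightarrow> real) \<Rightarrow> (arc \<Rightarrow> complex) \<Rightarrow> (arc \<Rightarrow> complex)" where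
  "Uop p q r \<psi> = shift (coin p q r \<psi>)"

definition probX :: "(nat \<Rightarrow> real) \<Rightarrow> (nat \<Rightarrow> real) \<Rightarrow> (nat \<Rightarrow> real) \<Rightarrow> (arc \<Rightarrow> complex) \<Rightarrow> nat \<Rightarrow> nat \<Rightarrow> real" where
  "probX p q r \<Psi> t i = (\<Sum>a\<in>{a. origin a = i \<and> inA r a}. (cmod (((Uop p q r) ^^ t) \<Psi> a))^2)"

definition time_avg :: "(nat \<Rightarrow> real) \<Rightarrow> (nat \<Rightarrow> real) \<Rightarrow> (nat \<Rightarrow> real) \<Rightarrow> (arc \<Rightarrow> complex) \<Rightarrow> nat \<Rightarrow> nat \<Rightarrow> real" where
  "time_avg p q r \<Psi> i T = (\<Sum>t<T. probX p q r \<Psi> t i) / real T"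

definition wgt :: "(nat \<Rightarrow> real) \<Rightarrow> (nat \<Rightarrow> real) \<Rightarrow> nat \<Rightarrow> real" where
  "wgt p q j = (\<Prod>k<j. p k) / (\<Prod>k\<in>{1..j}. q k)"

definition C_R :: "(nat \<Rightarrow> real) \<Rightarrow> (nat \<Rightarrow> real) \<Rightarrow> real" where
  "C_R p q = (\<Sum>n. wgt p q (Suc n))"

definition pi_stat :: "(nat \<Rightarrow> real) \<Rightarrow> (nat \<Rightarrow> real) \<Rightarrow> nat \<Rightarrow> real" where
  "pi_stat p q j = (1 / (1 + C_R p q)) *
     ((if j = 0 then 1 else 0) + (1 - (if j = 0 then 1 else 0)) * wgt p q j)"

end

theory Submission
  imports Defs
begin


definition l2s :: "('i \<Rightarrow> complex) \<Rightarrow> bool" where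
  "l2s f \<longleftrightarrow> (\<lambda>a. (cmod (f a))^2) summable_on UNIV"

lemma l2s_zero[simp]: "l2s (\<lambda>_. 0)"
  by (simp add: l2s_def)

lemma sq_add_le: "(cmod (x + y))^2 \<le> 2 * (cmod x)^2 + 2 * (cmod y)^2"
proof -
  have "cmod (x+y) \<le> cmod x + cmod y" by (rule norm_triangle_ineq)
  hence "(cmod (x+y))^2 \<le> (cmod x + cmod y)^2" by (simp add: power_mono)
  moreover have "0 \<le> (cmod x - cmod y)^2" by simp
  ultimately show ?thesis by (simp add: power2_eq_square algebra_simps)
qed

lemma l2s_add: assumes "l2s f" "l2s g" shows "l2s (\<lambda>a. f a + g a)"
  unfolding l2s_def
proof (rule summable_on_comparison_test)
  show "(\<lambda>a. 2 * (cmod (f a))^2 + 2 * (cmod (g a))^2) summable_on UNIV"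
    using assms unfolding l2s_def
    by (intro summable_on_add summable_on_cmult_right)
qed (auto intro: sq_add_le)

lemma l2s_scale: assumes "l2s f" shows "l2s (\<lambda>a. c * f a)"
  using summable_on_cmult_right[OF assms[unfolded l2s_def], of "(cmod c)^2"]
  by (simp add: l2s_def norm_mult power_mult_distrib)

lemma l2s_uminus: assumes "l2s f" shows "l2s (\<lambda>a. - f a)"
  using assms by (simp add: l2s_def)

lemma l2s_diff: assumes "l2s f" "l2s g" shows "l2s (\<lambda>a. f a - g a)"
  using l2s_add[OF assms(1) l2s_uminus[OF assms(2)]] by simp

lemma l2s_cnj: assumes "l2s f" shows "l2s (\<lambda>a. cnj (f a))"
  using assms by (simp add: l2s_def)

lemma prod_le: "cmod (cnj x * y) \<le> ((cmod x)^2 + (cmod y)^2) * (1/2)"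
proof -
  have "0 \<le> (cmod x - cmod y)^2" by simp
  thus ?thesis by (simp add: norm_mult power2_diff field_simps)
qed

lemma l2s_prod_abs: assumes "l2s f" "l2s g"
  shows "(\<lambda>a. norm (cnj (f a) * g a)) summable_on UNIV"
proof (rule summable_on_comparison_test)
  show "(\<lambda>a. ((cmod (f a))^2 + (cmod (g a))^2) * (1/2)) summable_on UNIV"
    using assms unfolding l2s_def
    by (intro summable_on_add summable_on_cmult_left) auto
qed (rule prod_le, rule norm_ge_zero)

lemma l2s_prod: assumes "l2s f" "l2s g"
  shows "(\<lambda>a. cnj (f a) * g a) summable_on UNIV"
  by (rule abs_summable_summable[OF l2s_prod_abs[OF assms]])

definition ci :: "('i \<Rightarrow> complex) \<Rightarrow> ('i \<Rightarrow> complex) \<Rightarrow> complex" where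
  "ci f g = infsum (\<lambda>a. cnj (f a) * g a) UNIV"

definition nsq :: "('i \<Rightarrow> complex) \<Rightarrow> real" where
  "nsq f = infsum (\<lambda>a. (cmod (f a))^2) UNIV"

lemma cnj_mult_self: "cnj z * z = complex_of_real ((cmod z)^2)"
  by (subst complex_norm_square) (rule mult.commute)

lemma ci_self: assumes "l2s f" shows "ci f f = of_real (nsq f)"
proof -
  have "ci f f = infsum (\<lambda>a. of_real ((cmod (f a))^2)) UNIV"
    unfolding ci_def cnj_mult_self ..
  also have "\<dots> = of_real (nsq f)"
    unfolding nsq_def
    by (rule infsumI[OF has_sum_of_real[OF has_sum_infsum]]) (use assms in \<open>simp add: l2s_def\<close>)
  finally show ?thesis .
qed

lemma nsq_nonneg: "nsq f \<ge> 0"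
  unfolding nsq_def by (rule infsum_nonneg) simp

lemma nsq_zero_iff: assumes "l2s f" shows "nsq f = 0 \<longleftrightarrow> f = (\<lambda>_. 0)"
proof
  assume "nsq f = 0"
  hence "\<And>a. (cmod (f a))^2 = 0"
    using nonneg_infsum_le_0D[of "\<lambda>a. (cmod (f a))^2" UNIV] assms
    unfolding nsq_def l2s_def by auto
  thus "f = (\<lambda>_. 0)" by auto
qed (simp add: nsq_def)

lemma ci_add_left: assumes "l2s f" "l2s g" "l2s h"
  shows "ci (\<lambda>a. f a + g a) h = ci f h + ci g h"
  unfolding ci_def using infsum_add[OF l2s_prod[OF assms(1,3)] l2s_prod[OF assms(2,3)]]
  by (simp add: distrib_right)

lemma ci_add_right: assumes "l2s f" "l2s g" "l2s h"
  shows "ci h (\<lambda>a. f a + g a) = ci h f + ci h g"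
  unfolding ci_def using infsum_add[OF l2s_prod[OF assms(3,1)] l2s_prod[OF assms(3,2)]]
  by (simp add: distrib_left)

lemma ci_scale_right: "ci f (\<lambda>a. c * g a) = c * ci f g"
  unfolding ci_def
  by (subst infsum_cmult_right'[symmetric]) (simp add: algebra_simps)

lemma ci_scale_left: "ci (\<lambda>a. c * f a) g = cnj c * ci f g"
  unfolding ci_def
  by (subst infsum_cmult_right'[symmetric]) (simp add: algebra_simps)

lemma ci_commute: "ci g f = cnj (ci f g)"
  unfolding ci_def by (subst infsum_cnj[symmetric]) (simp add: mult.commute)

typedef 'i l2 = "{f::'i \<Rightarrow> complex. l2s f}" morphisms vl mkl2
  by (rule exI[of _ "\<lambda>_. 0"]) simp

setup_lifting type_definition_l2

instantiation l2 :: (type) real_vector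
begin
lift_definition zero_l2 :: "'a l2" is "\<lambda>_. 0" by simp
lift_definition plus_l2 :: "'a l2 \<Rightarrow> 'a l2 \<Rightarrow> 'a l2" is "\<lambda>f g a. f a + g a" by (rule l2s_add)
lift_definition uminus_l2 :: "'a l2 \<Rightarrow> 'a l2" is "\<lambda>f a. - f a" by (rule l2s_uminus)
lift_definition minus_l2 :: "'a l2 \<Rightarrow> 'a l2 \<Rightarrow> 'a l2" is "\<lambda>f g a. f a - g a" by (rule l2s_diff)
lift_definition scaleR_l2 :: "real \<Rightarrow> 'a l2 \<Rightarrow> 'a l2" is "\<lambda>r f a. complex_of_real r * f a"
  by (rule l2s_scale)
instance
proof
  fix a b :: real and x y z :: "'a l2"
  show "x + y + z = x + (y + z)" by transfer (simp add: add.assoc)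
  show "x + y = y + x" by transfer (simp add: add.commute)
  show "0 + x = x" by transfer simp
  show "- x + x = 0" by transfer simp
  show "x - y = x + - y" by transfer simp
  show "a *\<^sub>R (x + y) = a *\<^sub>R x + a *\<^sub>R y" by transfer (simp add: algebra_simps)
  show "(a + b) *\<^sub>R x = a *\<^sub>R x + b *\<^sub>R x" by transfer (simp add: algebra_simps)
  show "a *\<^sub>R b *\<^sub>R x = (a * b) *\<^sub>R x" by transfer (simp add: algebra_simps)
  show "1 *\<^sub>R x = x" by transfer simp
qed
end

instantiation l2 :: (type) real_inner
begin
lift_definition inner_l2 :: "'a l2 \<Rightarrow> 'a l2 \<Rightarrow> real" is "\<lambda>f g. Re (ci f g)" .
lift_definition norm_l2 :: "'a l2 \<Rightarrow> real" is "\<lambda>f. sqrt (nsq f)" .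
definition dist_l2 :: "'a l2 \<Rightarrow> 'a l2 \<Rightarrow> real" where "dist_l2 x y = norm (x - y)"
definition sgn_l2 :: "'a l2 \<Rightarrow> 'a l2" where "sgn_l2 x = x /\<^sub>R norm x"
definition uniformity_l2 :: "('a l2 \<times> 'a l2) filter" where
  "uniformity_l2 = (INF e\<in>{0<..}. principal {(x, y). dist x y < e})"
definition open_l2 :: "'a l2 set \<Rightarrow> bool" where
  "open_l2 U = (\<forall>x\<in>U. \<forall>\<^sub>F (x', y) in uniformity. x' = x \<longrightarrow> y \<in> U)"
instance
proof
  fix a b :: real and x y z :: "'a l2" and U :: "'a l2 set"
  show "dist x y = norm (x - y)" by (simp add: dist_l2_def)
  show "sgn x = x /\<^sub>R norm x" by (simp add: sgn_l2_def)
  show "uniformity = (INF e\<in>{0<..}. principal {(x, y::'a l2). dist x y < e})"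
    by (simp add: uniformity_l2_def)
  show "open U = (\<forall>x\<in>U. \<forall>\<^sub>F (x', y) in uniformity. x' = x \<longrightarrow> y \<in> U)"
    by (simp add: open_l2_def)
  show "inner x y = inner y x" by transfer (metis ci_commute complex_cnj(1) cnj.sel(1))
  show "inner (x + y) z = inner x z + inner y z" by transfer (simp add: ci_add_left)
  show "inner (a *\<^sub>R x) y = a * inner x y" by transfer (simp add: ci_scale_left)
  show "0 \<le> inner x x" by transfer (simp add: ci_self nsq_nonneg)
  show "(inner x x = 0) = (x = 0)" by transfer (simp add: ci_self nsq_zero_iff)
  show "norm x = sqrt (inner x x)" by transfer (simp add: ci_self)
qed
end


lemmas vec_simps[simp] = zero_l2.rep_eq plus_l2.rep_eq uminus_l2.rep_eq minus_l2.rep_eq scaleR_l2.rep_eq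

lemma l2s_vec[simp]: "l2s (vl x)"
  using vl by auto

lemma norm_l2_vec: "norm x = sqrt (nsq (vl x))"
  by (simp add: norm_l2.rep_eq)

lemma nsq_vec: "nsq (vl x) = (norm x)^2"
  by (simp add: norm_l2_vec nsq_nonneg)

lemma sum_le_nsq: assumes "l2s f" "finite F" shows "(\<Sum>a\<in>F. (cmod (f a))^2) \<le> nsq f"
  unfolding nsq_def by (rule finite_sum_le_infsum) (use assms in \<open>auto simp: l2s_def\<close>)

lemma coord_le: "cmod (vl x a) \<le> norm x"
proof -
  have "(cmod (vl x a))^2 \<le> (norm x)^2"
    using sum_le_nsq[of "vl x" "{a}"] by (simp add: nsq_vec)
  thus ?thesis by (simp add: power2_le_iff_abs_le)
qed

lemma coord_tendsto: assumes "X \<longlonglongrightarrow> y" shows "(\<lambda>n. vl (X n) a) \<longlonglongrightarrow> vl y a"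
proof (rule LIMSEQ_I)
  fix e :: real assume "0 < e"
  then obtain N where "\<forall>n\<ge>N. norm (X n - y) < e" using LIMSEQ_D[OF assms] by blast
  thus "\<exists>N. \<forall>n\<ge>N. norm (vl (X n) a - vl y a) < e"
  proof (intro exI allI impI)
    fix n assume "N \<le> n"
    have "norm (vl (X n) a - vl y a) = cmod (vl (X n - y) a)" by simp
    also have "\<dots> \<le> norm (X n - y)" by (rule coord_le)
    also have "\<dots> < e" using \<open>\<forall>n\<ge>N. norm (X n - y) < e\<close> \<open>N \<le> n\<close> by blast
    finally show "norm (vl (X n) a - vl y a) < e" .
  qed
qed

instance l2 :: (type) complete_space
proof
  fix X :: "nat \<Rightarrow> 'a l2"
  assume C: "Cauchy X"
  have "\<And>a. Cauchy (\<lambda>n. vl (X n) a)"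
  proof (rule metric_CauchyI)
    fix a and e :: real assume "0 < e"
    then obtain M where M: "\<forall>m\<ge>M. \<forall>n\<ge>M. dist (X m) (X n) < e" using metric_CauchyD[OF C] by blast
    show "\<exists>M. \<forall>m\<ge>M. \<forall>n\<ge>M. dist (vl (X m) a) (vl (X n) a) < e"
    proof (intro exI allI impI)
      fix m n assume "M \<le> m" "M \<le> n"
      hence "dist (X m) (X n) < e" using M by blast
      thus "dist (vl (X m) a) (vl (X n) a) < e"
        using coord_le[of "X m - X n" a] by (simp add: dist_norm)
    qed
  qed
  hence "\<And>a. convergent (\<lambda>n. vl (X n) a)" by (simp add: Cauchy_convergent_iff)
  then obtain g where g: "\<And>a. (\<lambda>n. vl (X n) a) \<longlonglongrightarrow> g a"
    unfolding convergent_def by metis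
  have key: "\<exists>N. \<forall>n\<ge>N. l2s (\<lambda>a. vl (X n) a - g a) \<and> nsq (\<lambda>a. vl (X n) a - g a) \<le> e^2"
    if "e > 0" for e :: real
  proof -
    obtain M where M: "\<forall>m\<ge>M. \<forall>n\<ge>M. dist (X m) (X n) < e" using metric_CauchyD[OF C \<open>e>0\<close>] by blast
    have fin: "(\<Sum>a\<in>F. (cmod (vl (X n) a - g a))^2) \<le> e^2" if "n \<ge> M" "finite F" for n F
    proof (rule tendsto_le[OF trivial_limit_sequentially])
      show "(\<lambda>m. \<Sum>a\<in>F. (cmod (vl (X n) a - vl (X m) a))^2) \<longlonglongrightarrow> (\<Sum>a\<in>F. (cmod (vl (X n) a - g a))^2)"
        by (intro tendsto_intros g)
      show "(\<lambda>m. e^2) \<longlonglongrightarrow> e^2" by simp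
      show "\<forall>\<^sub>F m in sequentially. (\<Sum>a\<in>F. (cmod (vl (X n) a - vl (X m) a))^2) \<le> e^2"
      proof (rule eventually_sequentiallyI[of M])
        fix m assume "M \<le> m"
        have "(\<Sum>a\<in>F. (cmod (vl (X n) a - vl (X m) a))^2) \<le> nsq (vl (X n - X m))"
          using sum_le_nsq[OF l2s_vec \<open>finite F\<close>, of "X n - X m"] by simp
        also have "\<dots> = (norm (X n - X m))^2" by (rule nsq_vec)
        also have "\<dots> \<le> e^2"
          using M \<open>M \<le> m\<close> \<open>n \<ge> M\<close> by (intro power_mono) (auto simp: dist_norm less_imp_le)
        finally show "(\<Sum>a\<in>F. (cmod (vl (X n) a - vl (X m) a))^2) \<le> e^2" .
      qed
    qed
    show ?thesis
    proof (intro exI allI impI conjI)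
      fix n assume "M \<le> n"
      show S: "l2s (\<lambda>a. vl (X n) a - g a)" unfolding l2s_def
        by (rule nonneg_bdd_above_summable_on) (use fin[OF \<open>M \<le> n\<close>] in \<open>auto simp: bdd_above_def\<close>)
      show "nsq (\<lambda>a. vl (X n) a - g a) \<le> e^2" unfolding nsq_def
        by (rule infsum_le_finite_sums) (use S fin[OF \<open>M \<le> n\<close>] in \<open>auto simp: l2s_def\<close>)
    qed
  qed
  obtain N where N: "l2s (\<lambda>a. vl (X N) a - g a)" using key[of 1] by auto
  have "l2s g" using l2s_diff[OF l2s_vec[of "X N"] N] by simp
  define G where "G = mkl2 g"
  have vG: "vl G = g" unfolding G_def using \<open>l2s g\<close> by (simp add: mkl2_inverse)
  have "X \<longlonglongrightarrow> G"
  proof (rule LIMSEQ_I)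
    fix r :: real assume "0 < r"
    then obtain N where N: "\<forall>n\<ge>N. nsq (\<lambda>a. vl (X n) a - g a) \<le> (r/2)^2" using key[of "r/2"] by auto
    show "\<exists>N. \<forall>n\<ge>N. norm (X n - G) < r"
    proof (intro exI allI impI)
      fix n assume "N \<le> n"
      have "norm (X n - G) = sqrt (nsq (\<lambda>a. vl (X n) a - g a))" by (simp add: norm_l2_vec vG)
      also have "\<dots> \<le> sqrt ((r/2)^2)" by (rule real_sqrt_le_mono) (use N \<open>N \<le> n\<close> in auto)
      also have "\<dots> < r" using \<open>0 < r\<close> by simp
      finally show "norm (X n - G) < r" .
    qed
  qed
  thus "convergent X" by (auto simp: convergent_def)
qed



lemma subspace_closure_gen:
  fixes S :: "'a::real_normed_vector set"
  assumes "subspace S" shows "subspace (closure S)"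
  unfolding subspace_def
proof (intro conjI ballI allI)
  show "0 \<in> closure S" using assms closure_subset subspace_0 by blast
next
  fix x y assume x: "x \<in> closure S" and y: "y \<in> closure S"
  show "x + y \<in> closure S" unfolding closure_approachable
  proof (intro allI impI)
    fix e :: real assume "e > 0"
    then obtain x' y' where "x' \<in> S" "dist x' x < e/2" "y' \<in> S" "dist y' y < e/2"
      using x y unfolding closure_approachable by (meson half_gt_zero)
    moreover have "dist (x' + y') (x + y) \<le> dist x' x + dist y' y"
      by (simp add: dist_norm norm_diff_triangle_le algebra_simps)
        (metis add_diff_add norm_triangle_ineq4 order_trans add_mono norm_triangle_ineq)
    ultimately show "\<exists>z\<in>S. dist z (x + y) < e"
      using assms by (intro bexI[of _ "x'+y'"]) (auto simp: subspace_add)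
  qed
next
  fix c :: real and x assume x: "x \<in> closure S"
  show "c *\<^sub>R x \<in> closure S" unfolding closure_approachable
  proof (intro allI impI)
    fix e :: real assume "e > 0"
    then obtain x' where "x' \<in> S" "dist x' x < e/(\<bar>c\<bar>+1)"
      using x unfolding closure_approachable by (metis divide_pos_pos abs_ge_zero add_nonneg_pos zero_less_one)
    moreover have "dist (c *\<^sub>R x') (c *\<^sub>R x) = \<bar>c\<bar> * dist x' x"
      by (simp add: dist_norm scaleR_diff_right[symmetric])
    moreover have "\<bar>c\<bar> * dist x' x \<le> (\<bar>c\<bar>+1) * dist x' x" by (simp add: mult_right_mono)
    moreover have "(\<bar>c\<bar>+1) * dist x' x < e" using \<open>dist x' x < e/(\<bar>c\<bar>+1)\<close>
      by (smt (verit) mult.commute pos_less_divide_eq abs_ge_zero)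
    ultimately show "\<exists>z\<in>S. dist z (c *\<^sub>R x) < e"
      using assms by (intro bexI[of _ "c *\<^sub>R x'"]) (auto simp: subspace_scale)
  qed
qed

lemma parallelogram:
  fixes a b :: "'a::real_inner"
  shows "(norm (a + b))^2 + (norm (a - b))^2 = 2 * (norm a)^2 + 2 * (norm b)^2"
  by (simp add: power2_norm_eq_inner inner_add_left inner_add_right inner_diff_left inner_diff_right inner_commute)

lemma norm_sub_scale:
  fixes w v :: "'a::real_inner"
  shows "(norm (w - t *\<^sub>R v))^2 = (norm w)^2 - 2*t*inner v w + t^2*(norm v)^2"
  unfolding power2_norm_eq_inner
  by (simp add: inner_diff_left inner_diff_right inner_commute[of w v] power2_eq_square algebra_simps)

lemma proj_exists:
  fixes S :: "'a::{real_inner,complete_space} set"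
  assumes sub: "subspace S" and cl: "closed S"
  shows "\<exists>p\<in>S. \<forall>v\<in>S. inner v (x - p) = 0"
proof -
  define D where "D = (\<lambda>s. norm (x - s)) ` S"
  define d where "d = Inf D"
  have S0: "0 \<in> S" using sub subspace_0 by blast
  have Dne: "D \<noteq> {}" using S0 D_def by blast
  have Dbdd: "bdd_below D" unfolding D_def by (rule bdd_belowI[of _ 0]) auto
  have dle: "d \<le> norm (x - s)" if "s \<in> S" for s
    unfolding d_def D_def by (rule cInf_lower) (use that Dbdd D_def in auto)
  have d0: "d \<ge> 0" using dle[OF S0] Dne Dbdd unfolding d_def D_def
    by (intro cInf_greatest) auto
  have "\<exists>s\<in>S. norm (x - s) < d + 1/(real n + 1)" for n
  proof -
    have "Inf D < d + 1/(real n + 1)" unfolding d_def by simp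
    then obtain t where "t \<in> D" "t < d + 1/(real n + 1)" using cInf_lessD[OF Dne] by blast
    thus ?thesis unfolding D_def by auto
  qed
  then obtain s where sS: "\<And>n. s n \<in> S" and sn: "\<And>n. norm (x - s n) < d + 1/(real n + 1)"
    by metis
  define K where "K = 2*d + 1"
  have sq: "(norm (x - s n))^2 \<le> d^2 + K/(real n + 1)" for n
  proof -
    have e1: "1/(real n + 1) \<le> 1" by simp
    have "(norm (x - s n))^2 \<le> (d + 1/(real n + 1))^2"
      using sn[of n] by (intro power_mono) auto
    also have "\<dots> = d^2 + 2*d*(1/(real n + 1)) + (1/(real n + 1))*(1/(real n + 1))"
      by (simp add: power2_eq_square algebra_simps)
    also have "\<dots> \<le> d^2 + 2*d*(1/(real n + 1)) + 1*(1/(real n + 1))"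
      using e1 by (intro add_left_mono mult_right_mono) auto
    also have "\<dots> = d^2 + K/(real n + 1)" by (simp add: K_def field_simps)
    finally show ?thesis .
  qed
  have K0: "K \<ge> 0" using d0 K_def by simp
  have par: "(norm (s n - s m))^2 \<le> 2*K/(real n + 1) + 2*K/(real m + 1)" for n m
  proof -
    have mid: "(1/2) *\<^sub>R (s n + s m) \<in> S" using sub sS by (simp add: subspace_add subspace_scale)
    have "d \<le> norm (x - (1/2) *\<^sub>R (s n + s m))" by (rule dle[OF mid])
    hence "d^2 \<le> (norm (x - (1/2) *\<^sub>R (s n + s m)))^2" using d0 by (simp add: power_mono)
    moreover have "(norm ((x - s n) + (x - s m)))^2 = 4 * (norm (x - (1/2) *\<^sub>R (s n + s m)))^2"
    proof -
      have "(x - s n) + (x - s m) = 2 *\<^sub>R (x - (1/2) *\<^sub>R (s n + s m))" by (simp add: algebra_simps scaleR_2)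
      thus ?thesis by (simp add: power_mult_distrib)
    qed
    moreover have "(norm ((x - s n) + (x - s m)))^2 + (norm ((x - s n) - (x - s m)))^2
        = 2 * (norm (x - s n))^2 + 2 * (norm (x - s m))^2" by (rule parallelogram)
    moreover have "(norm ((x - s n) - (x - s m)))^2 = (norm (s n - s m))^2"
      by (simp add: norm_minus_commute)
    ultimately show ?thesis using sq[of n] sq[of m] by linarith
  qed
  have "Cauchy s"
  proof (rule metric_CauchyI)
    fix e :: real assume "e > 0"
    obtain N :: nat where N: "4*K/(e^2) < real N"
      using reals_Archimedean2 by blast
    hence N: "4*K/(e^2) < real N + 1" by simp
    have "dist (s m) (s n) < e" if "m \<ge> N" "n \<ge> N" for m n
    proof -
      have "2*K/(real n + 1) \<le> 2*K/(real N + 1)" "2*K/(real m + 1) \<le> 2*K/(real N + 1)"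
        using that K0 by (auto intro!: divide_left_mono mult_nonneg_nonneg)
      hence "(norm (s n - s m))^2 \<le> 4*K/(real N + 1)" using par[of n m] by linarith
      also have "4*K/(real N + 1) < e^2"
      proof -
        have "4*K < (real N + 1) * e^2" using N \<open>e>0\<close> by (simp add: pos_divide_less_eq)
        thus ?thesis by (simp add: pos_divide_less_eq mult.commute)
      qed
      finally have "(norm (s n - s m))^2 < e^2" .
      hence "norm (s n - s m) < e" using \<open>e>0\<close> by (simp add: power_less_imp_less_base less_imp_le)
      thus ?thesis by (simp add: dist_norm norm_minus_commute)
    qed
    thus "\<exists>M. \<forall>m\<ge>M. \<forall>n\<ge>M. dist (s m) (s n) < e" by blast
  qed
  then obtain p where p: "s \<longlonglongrightarrow> p" using Cauchy_convergent_iff convergent_def by blast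
  have pS: "p \<in> S" using closed_sequentially[OF cl] sS p by blast
  have "(\<lambda>n. (norm (x - s n))^2) \<longlonglongrightarrow> (norm (x - p))^2" by (intro tendsto_intros p)
  moreover have "(\<lambda>n. d^2 + K/(real n + 1)) \<longlonglongrightarrow> d^2 + 0"
  proof (rule tendsto_add[OF tendsto_const])
    have "(\<lambda>n. K / real (Suc n)) \<longlonglongrightarrow> 0" by (rule LIMSEQ_Suc[OF lim_const_over_n])
    thus "(\<lambda>n. K / (real n + 1)) \<longlonglongrightarrow> 0" by (simp only: of_nat_Suc add.commute)
  qed
  ultimately have pd: "(norm (x - p))^2 \<le> d^2"
    using sq by (intro LIMSEQ_le[where X = "\<lambda>n. (norm (x - s n))^2"]) auto
  show ?thesis
  proof (intro bexI[OF _ pS] ballI)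
    fix v assume vS: "v \<in> S"
    define c where "c = inner v (x - p)"
    show "inner v (x - p) = 0"
    proof (rule ccontr)
      assume "inner v (x - p) \<noteq> 0"
      hence v0: "v \<noteq> 0" by auto
      define t where "t = c / (norm v)^2"
      have "p + t *\<^sub>R v \<in> S" using sub pS vS by (simp add: subspace_add subspace_scale)
      hence "d \<le> norm (x - (p + t *\<^sub>R v))" by (rule dle)
      hence "d^2 \<le> (norm ((x - p) - t *\<^sub>R v))^2" using d0 by (simp add: power_mono algebra_simps)
      also have "\<dots> = (norm (x - p))^2 - 2 * t * c + t^2 * (norm v)^2"
        unfolding c_def by (rule norm_sub_scale)
      also have "\<dots> = (norm (x - p))^2 - c^2 / (norm v)^2"
        using v0 by (simp add: t_def power2_eq_square field_simps)
      finally have "c^2 / (norm v)^2 \<le> 0" using pd by linarith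
      moreover have "c^2 / (norm v)^2 > 0" using v0 \<open>inner v (x - p) \<noteq> 0\<close> c_def by simp
      ultimately show False by simp
    qed
  qed
qed


lemma norm_diff_sq:
  fixes a b :: "'a::real_inner"
  shows "(norm (a - b))^2 = (norm a)^2 - 2 * inner a b + (norm b)^2"
  unfolding power2_norm_eq_inner
  by (simp add: inner_diff_left inner_diff_right inner_commute[of b a])

lemma mean_ergodic:
  fixes V :: "'a::{real_inner,complete_space} \<Rightarrow> 'a"
  assumes add: "\<And>a b. V (a + b) = V a + V b" and scl: "\<And>c a. V (c *\<^sub>R a) = c *\<^sub>R V a"
    and contr: "\<And>a. norm (V a) \<le> norm a"
  shows "\<exists>y. V y = y \<and> x - y \<in> closure (range (\<lambda>w. w - V w)) \<and>
           (\<lambda>T. (1/real T) *\<^sub>R (\<Sum>t<T. (V^^t) x)) \<longlonglongrightarrow> y"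
proof -
  have V0: "V 0 = 0" using scl[of 0 0] by simp
  have Vdiff: "V (a - b) = V a - V b" for a b using add[of "a-b" b] by simp
  have Vn_add: "(V^^n) (a+b) = (V^^n) a + (V^^n) b" for n a b by (induction n) (simp_all add: add)
  have Vn_diff: "(V^^n) (a-b) = (V^^n) a - (V^^n) b" for n a b
    using Vn_add[of n "a-b" b] by simp
  have Vn_contr: "norm ((V^^n) a) \<le> norm a" for n a
    by (induction n) (auto intro: order_trans[OF contr])
  define R where "R = range (\<lambda>w. w - V w)"
  have subR: "subspace R" unfolding subspace_def R_def
  proof (intro conjI ballI allI)
    show "0 \<in> range (\<lambda>w. w - V w)" using V0 by (intro image_eqI[of _ _ 0]) auto
  next
    fix a b assume "a \<in> range (\<lambda>w. w - V w)" "b \<in> range (\<lambda>w. w - V w)"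
    then obtain u v where "a = u - V u" "b = v - V v" by auto
    thus "a + b \<in> range (\<lambda>w. w - V w)" by (intro image_eqI[of _ _ "u+v"]) (auto simp: add)
  next
    fix c :: real and a assume "a \<in> range (\<lambda>w. w - V w)"
    then obtain u where "a = u - V u" by auto
    thus "c *\<^sub>R a \<in> range (\<lambda>w. w - V w)"
      by (intro image_eqI[of _ _ "c *\<^sub>R u"]) (auto simp: scl scaleR_diff_right)
  qed
  define G where "G = closure R"
  have subG: "subspace G" unfolding G_def by (rule subspace_closure_gen[OF subR])
  obtain q where qG: "q \<in> G" and qo: "\<forall>v\<in>G. inner v (x - q) = 0"
    using proj_exists[OF subG] G_def by blast
  define y where "y = x - q"
  have Vy: "V y = y"
  proof -
    have "y - V y \<in> R" unfolding R_def by (rule rangeI)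
    hence "y - V y \<in> G" unfolding G_def using closure_subset by blast
    hence "inner (y - V y) (x - q) = 0" using qo by blast
    hence "inner (y - V y) y = 0" by (simp add: y_def)
    hence iy: "inner (V y) y = inner y y" by (simp add: inner_diff_left)
    have "(norm (V y - y))^2 = (norm (V y))^2 - 2 * inner (V y) y + (norm y)^2"
      by (rule norm_diff_sq)
    also have "\<dots> \<le> 0"
    proof -
      have "(norm (V y))^2 \<le> (norm y)^2" using contr[of y] by (simp add: power_mono)
      moreover have "inner (V y) y = (norm y)^2" using iy by (simp add: power2_norm_eq_inner)
      ultimately show ?thesis by linarith
    qed
    finally have "norm (V y - y) = 0" by simp
    thus ?thesis by simp
  qed
  have Vny: "(V^^n) y = y" for n by (induction n) (simp_all add: Vy)
  define A where "A = (\<lambda>T z. (1/real T) *\<^sub>R (\<Sum>t<T. (V^^t) z))"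
  have AxA: "A T x = A T q + y" if "T > 0" for T
  proof -
    have "x = q + y" using y_def by simp
    hence "(\<Sum>t<T. (V^^t) x) = (\<Sum>t<T. (V^^t) q) + (\<Sum>t<T. y)"
      by (simp add: Vn_add Vny sum.distrib)
    thus ?thesis using that by (simp add: A_def scaleR_add_right sum_constant_scaleR)
  qed
  have normA: "norm (A T z) \<le> norm z" for T z
  proof (cases "T = 0")
    case True thus ?thesis by (simp add: A_def)
  next
    case False
    have "norm (\<Sum>t<T. (V^^t) z) \<le> (\<Sum>t<T. norm ((V^^t) z))" by (rule norm_sum)
    also have "\<dots> \<le> (\<Sum>t<T. norm z)" by (intro sum_mono Vn_contr)
    finally have "norm (\<Sum>t<T. (V^^t) z) \<le> real T * norm z" by simp
    thus ?thesis using False by (simp add: A_def field_simps)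
  qed
  have Atel: "A T (w - V w) = (1/real T) *\<^sub>R (w - (V^^T) w)" for T w
  proof -
    have "(\<Sum>t<T. (V^^t) (w - V w)) = (\<Sum>t<T. (V^^t) w - (V^^(Suc t)) w)"
      by (intro sum.cong refl) (simp add: Vn_diff funpow_swap1)
    also have "\<dots> = w - (V^^T) w" by (subst sum_lessThan_telescope') simp
    finally show ?thesis by (simp add: A_def)
  qed
  have Aq: "(\<lambda>T. A T q) \<longlonglongrightarrow> 0"
  proof (rule LIMSEQ_I)
    fix e :: real assume "e > 0"
    then obtain g where "g \<in> R" "dist g q < e/2" using qG unfolding G_def closure_approachable
      by (meson half_gt_zero)
    then obtain w where gw: "g = w - V w" and dg: "norm (q - g) < e/2"
      unfolding R_def by (auto simp: dist_norm norm_minus_commute)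
    obtain N :: nat where N: "4 * norm w / e < real N" using reals_Archimedean2 by blast
    show "\<exists>N. \<forall>T\<ge>N. norm (A T q - 0) < e"
    proof (intro exI allI impI)
      fix T assume "Suc N \<le> T"
      hence T0: "real T > 0" and TN: "real N < real T" by auto
      have "A T q = A T (q - g) + A T g"
        by (simp add: A_def Vn_diff sum_subtractf scaleR_diff_right)
      hence "norm (A T q) \<le> norm (A T (q - g)) + norm (A T g)" by (simp add: norm_triangle_ineq)
      also have "norm (A T (q - g)) < e/2" using normA[of T "q-g"] dg by linarith
      also have "norm (A T g) \<le> 2 * norm w / real T"
      proof -
        have "norm (w - (V^^T) w) \<le> norm w + norm ((V^^T) w)" by (rule norm_triangle_ineq4)
        also have "\<dots> \<le> 2 * norm w" using Vn_contr[of T w] by simp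
        finally have "norm (w - (V^^T) w) \<le> 2 * norm w" .
        hence "norm (w - (V^^T) w) / real T \<le> 2 * norm w / real T"
          using T0 by (simp add: divide_right_mono)
        moreover have "norm (A T g) = norm (w - (V^^T) w) / real T"
          using T0 by (simp add: gw Atel)
        ultimately show ?thesis by simp
      qed
      also have "2 * norm w / real T < e/2"
      proof -
        have "4 * norm w < real N * e" using N \<open>e>0\<close> by (simp add: pos_divide_less_eq)
        also have "\<dots> \<le> real T * e" using TN \<open>e>0\<close> by simp
        finally have "4 * norm w < real T * e" .
        hence "2 * norm w < (e/2) * real T" by (simp add: field_simps)
        thus ?thesis using T0 by (simp add: pos_divide_less_eq)
      qed
      finally show "norm (A T q - 0) < e" by simp
    qed
  qed
  have "(\<lambda>T. A T q + y) \<longlonglongrightarrow> 0 + y" by (intro tendsto_add Aq tendsto_const)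
  hence l1: "(\<lambda>T. A T q + y) \<longlonglongrightarrow> y" by simp
  have ev: "\<forall>\<^sub>F T in sequentially. A T q + y = A T x"
    by (rule eventually_sequentiallyI[of 1]) (simp add: AxA)
  have "(\<lambda>T. A T x) \<longlonglongrightarrow> y" by (rule Lim_transform_eventually[OF l1 ev])
  moreover have "x - y \<in> closure (range (\<lambda>w. w - V w))" using qG unfolding y_def G_def R_def by simp
  ultimately show ?thesis using Vy unfolding A_def by blast
qed



section \<open>complex structure\<close>

lift_definition cs :: "complex \<Rightarrow> 'a l2 \<Rightarrow> 'a l2" is "\<lambda>c f a. c * f a" by (rule l2s_scale)
lift_definition cinner :: "'a l2 \<Rightarrow> 'a l2 \<Rightarrow> complex" is ci .

lemmas vl_cs[simp] = cs.rep_eq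

lemma inner_cinner: "inner x y = Re (cinner x y)"
  by transfer simp

lemma cinner_self: "cinner x x = complex_of_real ((norm x)^2)"
  by transfer (simp add: ci_self nsq_nonneg)

lemma cinner_add_right: "cinner x (y + z) = cinner x y + cinner x z"
  by transfer (simp add: ci_add_right)

lemma cinner_add_left: "cinner (y + z) x = cinner y x + cinner z x"
  by transfer (simp add: ci_add_left)

lemma cinner_cs_right: "cinner x (cs c y) = c * cinner x y"
  by transfer (simp add: ci_scale_right)

lemma cinner_cs_left: "cinner (cs c x) y = cnj c * cinner x y"
  by transfer (simp add: ci_scale_left)

lemma cinner_commute: "cinner y x = cnj (cinner x y)"
  by transfer (rule ci_commute)

lemma cinner_diff_right: "cinner x (y - z) = cinner x y - cinner x z"
  using cinner_add_right[of x "y - z" z] by simp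

lemma cinner_zero_right[simp]: "cinner x 0 = 0"
  using cinner_add_right[of x 0 0] by simp

lemma cinner_via_inner: "cinner x y = complex_of_real (inner x y) + \<i> * complex_of_real (inner (cs \<i> x) y)"
  by (simp add: inner_cinner cinner_cs_left complex_eq_iff)

lemma cs_zero[simp]: "cs 0 x = 0"
  by transfer simp

lemma cs_add: "cs c (x + y) = cs c x + cs c y"
  by transfer (simp add: algebra_simps)

lemma cs_scaleR: "a *\<^sub>R x = cs (complex_of_real a) x"
  by transfer simp

lemma vl_sum: "vl (\<Sum>t\<in>A. X t) a = (\<Sum>t\<in>A. vl (X t) a)"
  by (induction A rule: infinite_finite_induct) auto

section \<open>slices and tensor\<close>

lemma l2s_slice: assumes "l2s f" shows "l2s (\<lambda>c. f (c, d))"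
  unfolding l2s_def
proof (rule nonneg_bdd_above_summable_on)
  show "bdd_above (sum (\<lambda>c. (cmod (f (c, d)))^2) ` {F. F \<subseteq> UNIV \<and> finite F})"
  proof (rule bdd_aboveI)
    fix s assume "s \<in> sum (\<lambda>c. (cmod (f (c, d)))^2) ` {F. F \<subseteq> UNIV \<and> finite F}"
    then obtain C where C: "finite C" "s = (\<Sum>c\<in>C. (cmod (f (c, d)))^2)" by auto
    have "s = (\<Sum>p\<in>(\<lambda>c. (c,d)) ` C. (cmod (f p))^2)"
      using C by (subst sum.reindex) (auto simp: inj_on_def)
    also have "\<dots> \<le> nsq f" using C assms by (intro sum_le_nsq) auto
    finally show "s \<le> nsq f" .
  qed
qed auto

lemma infsum_fin_sum:
  fixes h :: "'c \<Rightarrow> 'd \<Rightarrow> real"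
  assumes "finite D" "\<And>d. d \<in> D \<Longrightarrow> (\<lambda>c. h c d) summable_on UNIV"
  shows "(\<lambda>c. \<Sum>d\<in>D. h c d) summable_on UNIV \<and> (\<Sum>d\<in>D. infsum (\<lambda>c. h c d) UNIV) = infsum (\<lambda>c. \<Sum>d\<in>D. h c d) UNIV"
  using assms
proof (induction D rule: finite_induct)
  case empty thus ?case by simp
next
  case (insert d D)
  have s1: "(\<lambda>c. h c d) summable_on UNIV" using insert by auto
  have IH: "(\<lambda>c. \<Sum>d\<in>D. h c d) summable_on UNIV \<and> (\<Sum>d\<in>D. infsum (\<lambda>c. h c d) UNIV) = infsum (\<lambda>c. \<Sum>d\<in>D. h c d) UNIV"
    using insert by auto
  show ?case using insert(1,2) IH s1
    by (simp add: summable_on_add infsum_add)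
qed

lemma colsum_le: assumes "l2s f" "finite D"
  shows "(\<Sum>d\<in>D. nsq (\<lambda>c. f (c, d))) \<le> nsq f"
proof -
  let ?h = "\<lambda>c d. (cmod (f (c, d)))^2"
  have sl: "\<And>d. (\<lambda>c. ?h c d) summable_on UNIV" using l2s_slice[OF assms(1)] by (simp add: l2s_def)
  note fs = infsum_fin_sum[of D ?h, OF assms(2) sl]
  have "(\<Sum>d\<in>D. nsq (\<lambda>c. f (c, d))) = infsum (\<lambda>c. \<Sum>d\<in>D. ?h c d) UNIV"
    using fs by (simp add: nsq_def)
  also have "\<dots> \<le> nsq f"
  proof (rule infsum_le_finite_sums)
    show "(\<lambda>c. \<Sum>d\<in>D. ?h c d) summable_on UNIV" using fs by simp
    fix C :: "'a set" assume "finite C"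
    have "(\<Sum>c\<in>C. \<Sum>d\<in>D. ?h c d) = (\<Sum>p\<in>C \<times> D. (cmod (f p))^2)"
      by (simp add: sum.cartesian_product)
    also have "\<dots> \<le> nsq f" using \<open>finite C\<close> assms by (intro sum_le_nsq) auto
    finally show "(\<Sum>c\<in>C. \<Sum>d\<in>D. ?h c d) \<le> nsq f" .
  qed
  finally show ?thesis .
qed

lift_definition col :: "('a \<times> 'b) l2 \<Rightarrow> 'b \<Rightarrow> 'a l2" is "\<lambda>X d c. X (c, d)"
  by (rule l2s_slice)

lemmas vl_col[simp] = col.rep_eq

lemma tens_bound:
  fixes T :: "'a l2 \<Rightarrow> 'a l2" and X :: "('a \<times> 'b) l2"
  assumes contr: "\<And>x. norm (T x) \<le> norm x"
  defines "g \<equiv> (\<lambda>(a, d). vl (T (col X d)) a)"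
  shows "l2s g" "nsq g \<le> nsq (vl X)"
proof -
  have fin: "(\<Sum>p\<in>F. (cmod (g p))^2) \<le> nsq (vl X)" if "finite F" for F
  proof -
    define Fa where "Fa = fst ` F"
    define D where "D = snd ` F"
    have fs: "finite Fa" "finite D" using that Fa_def D_def by auto
    have "(\<Sum>p\<in>F. (cmod (g p))^2) \<le> (\<Sum>p\<in>Fa \<times> D. (cmod (g p))^2)"
    proof (rule sum_mono2)
      show "F \<subseteq> Fa \<times> D" unfolding Fa_def D_def by (auto intro: rev_image_eqI)
    qed (use fs in auto)
    also have "\<dots> = (\<Sum>a\<in>Fa. \<Sum>d\<in>D. (cmod (vl (T (col X d)) a))^2)"
      unfolding sum.cartesian_product g_def by (rule sum.cong) auto
    also have "\<dots> = (\<Sum>d\<in>D. \<Sum>a\<in>Fa. (cmod (vl (T (col X d)) a))^2)"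
      by (rule sum.swap)
    also have "\<dots> \<le> (\<Sum>d\<in>D. nsq (vl (T (col X d))))"
      using fs by (intro sum_mono sum_le_nsq) auto
    also have "\<dots> \<le> (\<Sum>d\<in>D. nsq (vl (col X d)))"
      unfolding nsq_vec using contr by (intro sum_mono power_mono) auto
    also have "\<dots> = (\<Sum>d\<in>D. nsq (\<lambda>c. vl X (c, d)))" by simp
    also have "\<dots> \<le> nsq (vl X)" using fs by (intro colsum_le) auto
    finally show ?thesis .
  qed
  show S: "l2s g" unfolding l2s_def
    by (rule nonneg_bdd_above_summable_on) (use fin in \<open>auto simp: bdd_above_def\<close>)
  show "nsq g \<le> nsq (vl X)" unfolding nsq_def
    by (rule infsum_le_finite_sums) (use S fin in \<open>auto simp: l2s_def nsq_def\<close>)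
qed

definition tens1 :: "('a l2 \<Rightarrow> 'a l2) \<Rightarrow> ('a \<times> 'b) l2 \<Rightarrow> ('a \<times> 'b) l2" where
  "tens1 T X = mkl2 (\<lambda>(a, d). vl (T (col X d)) a)"

lemma vl_tens1: assumes "\<And>x. norm (T x) \<le> norm x"
  shows "vl (tens1 T X) (a, d) = vl (T (col X d)) a"
  using tens_bound(1)[OF assms, of X] by (simp add: tens1_def mkl2_inverse)

lemma norm_tens1: assumes "\<And>x. norm (T x) \<le> norm x"
  shows "norm (tens1 T X) \<le> norm X"
proof -
  have "vl (tens1 T X) = (\<lambda>(a, d). vl (T (col X d)) a)"
    using tens_bound(1)[OF assms, of X] by (simp add: tens1_def mkl2_inverse)
  hence "nsq (vl (tens1 T X)) \<le> nsq (vl X)" using tens_bound(2)[OF assms, of X] by simp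
  thus ?thesis unfolding nsq_vec by (simp add: power_mono_iff)
qed

lemma col_add: "col (X + Y) d = col X d + col Y d"
  by transfer simp

lemma col_scaleR: "col (c *\<^sub>R X) d = c *\<^sub>R col X d"
  by transfer simp

lemma l2_eqI: "(\<And>a. vl x a = vl y a) \<Longrightarrow> x = y"
  by (metis vl_inject ext)

lemma tens1_add: assumes "\<And>x. norm (T x) \<le> norm x" "\<And>x y. T (x + y) = T x + T y"
  shows "tens1 T (X + Y) = tens1 T X + tens1 T Y"
  by (rule l2_eqI) (auto simp: vl_tens1[OF assms(1)] col_add assms(2))

lemma tens1_scaleR: assumes "\<And>x. norm (T x) \<le> norm x" "\<And>c x. T (c *\<^sub>R x) = c *\<^sub>R T x"
  shows "tens1 T (c *\<^sub>R X) = c *\<^sub>R tens1 T X"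
  by (rule l2_eqI) (auto simp: vl_tens1[OF assms(1)] col_scaleR assms(2))


lemma l2s_rk: assumes "l2s f" "l2s g" shows "l2s (\<lambda>(a, b). f a * cnj (g b))"
  unfolding l2s_def
proof (rule nonneg_bdd_above_summable_on)
  show "bdd_above (sum (\<lambda>p. (cmod (case p of (a, b) \<Rightarrow> f a * cnj (g b)))^2) ` {F. F \<subseteq> UNIV \<and> finite F})"
  proof (rule bdd_aboveI)
    fix s assume "s \<in> sum (\<lambda>p. (cmod (case p of (a, b) \<Rightarrow> f a * cnj (g b)))^2) ` {F. F \<subseteq> UNIV \<and> finite F}"
    then obtain F where F: "finite F" "s = (\<Sum>p\<in>F. (cmod (case p of (a, b) \<Rightarrow> f a * cnj (g b)))^2)" by auto
    have fs: "finite (fst ` F)" "finite (snd ` F)" using F by auto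
    have "s \<le> (\<Sum>p\<in>fst ` F \<times> snd ` F. (cmod (case p of (a, b) \<Rightarrow> f a * cnj (g b)))^2)"
      unfolding F(2)
    proof (rule sum_mono2)
      show "F \<subseteq> fst ` F \<times> snd ` F" by (auto intro: rev_image_eqI)
    qed (use fs in auto)
    also have "\<dots> = (\<Sum>a\<in>fst ` F. \<Sum>b\<in>snd ` F. (cmod (f a))^2 * (cmod (g b))^2)"
      unfolding sum.cartesian_product by (rule sum.cong) (auto simp: norm_mult power_mult_distrib)
    also have "\<dots> = (\<Sum>a\<in>fst ` F. (cmod (f a))^2) * (\<Sum>b\<in>snd ` F. (cmod (g b))^2)"
      by (simp add: sum_product)
    also have "\<dots> \<le> nsq f * nsq g"
      using fs assms by (intro mult_mono sum_le_nsq nsq_nonneg sum_nonneg) auto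
    finally show "s \<le> nsq f * nsq g" .
  qed
qed auto

lift_definition rk :: "'a l2 \<Rightarrow> 'b l2 \<Rightarrow> ('a \<times> 'b) l2" is "\<lambda>f g (a, b). f a * cnj (g b)"
  by (rule l2s_rk)

lemma vl_rk[simp]: "vl (rk x y) (a, b) = vl x a * cnj (vl y b)"
  by transfer simp

lemma col_rk: "col (rk x y) d = cs (cnj (vl y d)) x"
  by (rule l2_eqI) (simp add: mult.commute)

lemma tens1_rk: assumes "\<And>x. norm (T x) \<le> norm x" "\<And>c x. T (cs c x) = cs c (T x)"
  shows "tens1 T (rk x y) = rk (T x) y"
  by (rule l2_eqI) (auto simp: vl_tens1[OF assms(1)] col_rk assms(2) mult.commute)

lemma l2s_flip: assumes "l2s f" shows "l2s (\<lambda>(a, b). cnj (f (b, a)))"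
proof -
  have "bij_betw prod.swap UNIV UNIV" by (rule bij_betwI[of _ _ _ prod.swap]) auto
  hence "(\<lambda>p. (cmod (f (prod.swap p)))^2) summable_on UNIV"
    using assms unfolding l2s_def by (subst summable_on_reindex_bij_betw) auto
  thus ?thesis unfolding l2s_def by (simp add: case_prod_unfold prod.swap_def)
qed

lift_definition flip :: "('a \<times> 'a) l2 \<Rightarrow> ('a \<times> 'a) l2" is "\<lambda>X (a, b). cnj (X (b, a))"
  by (rule l2s_flip)

lemma vl_flip[simp]: "vl (flip X) (a, b) = cnj (vl X (b, a))"
  by transfer simp

lemma norm_flip: "norm (flip X) = norm X"
proof -
  have "bij_betw prod.swap UNIV UNIV" by (rule bij_betwI[of _ _ _ prod.swap]) auto
  hence "infsum (\<lambda>p. (cmod (vl X (prod.swap p)))^2) UNIV = infsum (\<lambda>p. (cmod (vl X p))^2) UNIV"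
    by (rule infsum_reindex_bij_betw)
  hence "nsq (vl (flip X)) = nsq (vl X)"
    unfolding nsq_def flip.rep_eq by (simp add: case_prod_unfold prod.swap_def)
  thus ?thesis by (simp add: norm_l2_vec)
qed

lemma flip_add: "flip (X + Y) = flip X + flip Y"
  by (rule l2_eqI) auto

lemma flip_scaleR: "flip (c *\<^sub>R X) = c *\<^sub>R flip X"
  by (rule l2_eqI) auto

lemma flip_rk: "flip (rk x y) = rk y x"
  by (rule l2_eqI) (auto simp: mult.commute)

theorem avg_conv:
  fixes U :: "'a l2 \<Rightarrow> 'a l2"
  assumes add: "\<And>x y. U (x + y) = U x + U y" and hom: "\<And>c x. U (cs c x) = cs c (U x)"
    and contr: "\<And>x. norm (U x) \<le> norm x"
  shows "\<exists>L. (\<lambda>T. (\<Sum>t<T. \<Sum>a\<in>F. (cmod (vl ((U^^t) \<psi>) a))^2) / real T) \<longlonglongrightarrow> L"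
proof -
  have sclU: "U (c *\<^sub>R x) = c *\<^sub>R U x" for c x by (simp add: cs_scaleR hom)
  define W where "W = (\<lambda>X. flip (tens1 U (flip (tens1 U X))))"
  have Wadd: "W (X + Y) = W X + W Y" for X Y
    by (simp add: W_def tens1_add[OF contr add] flip_add)
  have Wscl: "W (c *\<^sub>R X) = c *\<^sub>R W X" for c X
    by (simp add: W_def tens1_scaleR[OF contr sclU] flip_scaleR)
  have Wcontr: "norm (W X) \<le> norm X" for X
  proof -
    have "norm (W X) = norm (tens1 U (flip (tens1 U X)))" by (simp add: W_def norm_flip)
    also have "\<dots> \<le> norm (flip (tens1 U X))" by (rule norm_tens1[OF contr])
    also have "\<dots> = norm (tens1 U X)" by (rule norm_flip)
    also have "\<dots> \<le> norm X" by (rule norm_tens1[OF contr])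
    finally show ?thesis .
  qed
  have Wrk: "W (rk x x) = rk (U x) (U x)" for x
    by (simp add: W_def tens1_rk[OF contr hom] flip_rk)
  have Wn: "(W^^t) (rk \<psi> \<psi>) = rk ((U^^t) \<psi>) ((U^^t) \<psi>)" for t
    by (induction t) (simp_all add: Wrk)
  obtain Y where Y: "(\<lambda>T. (1/real T) *\<^sub>R (\<Sum>t<T. (W^^t) (rk \<psi> \<psi>))) \<longlonglongrightarrow> Y"
    using mean_ergodic[of W "rk \<psi> \<psi>", OF Wadd Wscl Wcontr] by blast
  define f where "f = (\<lambda>X. Re (\<Sum>a\<in>F. vl X (a, a)))"
  have "(\<lambda>T. f ((1/real T) *\<^sub>R (\<Sum>t<T. (W^^t) (rk \<psi> \<psi>)))) \<longlonglongrightarrow> f Y"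
    unfolding f_def by (intro tendsto_intros coord_tendsto Y)
  moreover have "f ((1/real T) *\<^sub>R (\<Sum>t<T. (W^^t) (rk \<psi> \<psi>)))
      = (\<Sum>t<T. \<Sum>a\<in>F. (cmod (vl ((U^^t) \<psi>) a))^2) / real T" for T
  proof -
    have e1: "Re (vl ((W^^t) (rk \<psi> \<psi>)) (a, a)) = (cmod (vl ((U^^t) \<psi>) a))^2" for t a
      by (simp add: Wn complex_norm_square[symmetric])
    have "f ((1/real T) *\<^sub>R (\<Sum>t<T. (W^^t) (rk \<psi> \<psi>)))
        = (\<Sum>a\<in>F. (1/real T) * (\<Sum>t<T. Re (vl ((W^^t) (rk \<psi> \<psi>)) (a, a))))"
      by (simp add: f_def vl_sum Re_sum)
    also have "\<dots> = (\<Sum>a\<in>F. (1/real T) * (\<Sum>t<T. (cmod (vl ((U^^t) \<psi>) a))^2))"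
      by (simp add: e1)
    also have "\<dots> = (1/real T) * (\<Sum>a\<in>F. \<Sum>t<T. (cmod (vl ((U^^t) \<psi>) a))^2)"
      by (rule sum_distrib_left[symmetric])
    also have "\<dots> = (\<Sum>t<T. \<Sum>a\<in>F. (cmod (vl ((U^^t) \<psi>) a))^2) / real T"
      by (simp add: sum.swap[of _ F])
    finally show ?thesis .
  qed
  ultimately show ?thesis by auto
qed


lemma sq_expand_ge: "(cmod (u + v))^2 \<ge> (cmod u)^2 + 2 * Re (cnj u * v)"
proof -
  have "(cmod (u + v))^2 = Re ((u + v) * cnj (u + v))"
    by (simp only: complex_norm_square[symmetric] Re_complex_of_real)
  also have "\<dots> = Re (u * cnj u) + 2 * Re (cnj u * v) + Re (v * cnj v)"
    by (simp add: algebra_simps)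
  also have "\<dots> = (cmod u)^2 + 2 * Re (cnj u * v) + (cmod v)^2"
    by (simp add: complex_norm_square[symmetric])
  finally show ?thesis by simp
qed

theorem avg_lower:
  fixes U :: "'a l2 \<Rightarrow> 'a l2"
  assumes add: "\<And>x y. U (x + y) = U x + U y" and hom: "\<And>c x. U (cs c x) = cs c (U x)"
    and contr: "\<And>x. norm (U x) \<le> norm x"
    and UPhi: "U \<Phi> = \<Phi>" and adj: "\<And>w. cinner \<Phi> (U w) = cinner \<Phi> w"
    and fix1: "\<And>y. U y = y \<Longrightarrow> \<exists>k. y = cs k \<Phi>" and Phi0: "\<Phi> \<noteq> 0"
    and lim: "(\<lambda>T. (\<Sum>t<T. \<Sum>a\<in>F. (cmod (vl ((U^^t) \<psi>) a))^2) / real T) \<longlonglongrightarrow> L"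
  shows "L \<ge> (cmod (cinner \<Phi> \<psi>))^2 / (norm \<Phi>)^4 * (\<Sum>a\<in>F. (cmod (vl \<Phi> a))^2)"
proof -
  have sclU: "U (r *\<^sub>R x) = r *\<^sub>R U x" for r x by (simp add: cs_scaleR hom)
  define n2 where "n2 = (norm \<Phi>)^2"
  have n2: "n2 > 0" using Phi0 by (simp add: n2_def)
  define c where "c = cinner \<Phi> \<psi> / complex_of_real n2"
  define z where "z = \<psi> - cs c \<Phi>"
  have cz: "cinner \<Phi> z = 0"
    using n2 by (simp add: z_def c_def cinner_diff_right cinner_cs_right cinner_self n2_def)
  have Un_add: "(U^^t) (x + y) = (U^^t) x + (U^^t) y" for t x y by (induction t) (simp_all add: add)
  have UnPhi: "(U^^t) (cs c \<Phi>) = cs c \<Phi>" for t by (induction t) (simp_all add: hom UPhi)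
  have psi_split: "(U^^t) \<psi> = cs c \<Phi> + (U^^t) z" for t
  proof -
    have "\<psi> = cs c \<Phi> + z" by (simp add: z_def)
    hence "(U^^t) \<psi> = (U^^t) (cs c \<Phi>) + (U^^t) z" by (metis Un_add)
    thus ?thesis by (simp add: UnPhi)
  qed
  obtain y where Uy: "U y = y" and zy: "z - y \<in> closure (range (\<lambda>w. w - U w))"
    and Az: "(\<lambda>T. (1/real T) *\<^sub>R (\<Sum>t<T. (U^^t) z)) \<longlonglongrightarrow> y"
    using mean_ergodic[of U z, OF add sclU contr] by blast
  define H where "H = {v. inner \<Phi> v = 0} \<inter> {v. inner (cs \<i> \<Phi>) v = 0}"
  have clH: "closed H" unfolding H_def by (intro closed_Int closed_hyperplane)
  have H_iff: "v \<in> H \<longleftrightarrow> cinner \<Phi> v = 0" for v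
    unfolding H_def by (simp add: inner_cinner cinner_cs_left complex_eq_iff)
  have "range (\<lambda>w. w - U w) \<subseteq> H" using adj by (auto simp: H_iff cinner_diff_right)
  hence "closure (range (\<lambda>w. w - U w)) \<subseteq> H" by (rule closure_minimal[OF _ clH])
  hence "cinner \<Phi> (z - y) = 0" using zy H_iff by blast
  hence cy: "cinner \<Phi> y = 0" using cz by (simp add: cinner_diff_right)
  obtain k where yk: "y = cs k \<Phi>" using fix1[OF Uy] by blast
  have "k * complex_of_real n2 = 0" using cy by (simp add: yk cinner_cs_right cinner_self n2_def)
  hence "k = 0" using n2 by simp
  hence y0: "y = 0" using yk by (simp add: cs_zero)
  define B where "B = (\<Sum>a\<in>F. (cmod (c * vl \<Phi> a))^2)"
  define R where "R = (\<lambda>T. B + 2 * (\<Sum>a\<in>F. Re (cnj (c * vl \<Phi> a) * vl ((1/real T) *\<^sub>R (\<Sum>t<T. (U^^t) z)) a)))"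
  have "R \<longlonglongrightarrow> B + 2 * (\<Sum>a\<in>F. Re (cnj (c * vl \<Phi> a) * vl y a))"
    unfolding R_def by (intro tendsto_intros coord_tendsto Az)
  hence Rl: "R \<longlonglongrightarrow> B" by (simp add: y0)
  have le: "R T \<le> (\<Sum>t<T. \<Sum>a\<in>F. (cmod (vl ((U^^t) \<psi>) a))^2) / real T" if "T \<ge> 1" for T
  proof -
    have T0: "real T > 0" using that by simp
    have "(\<Sum>t<T. \<Sum>a\<in>F. (cmod (vl ((U^^t) \<psi>) a))^2)
        \<ge> (\<Sum>t<T. \<Sum>a\<in>F. (cmod (c * vl \<Phi> a))^2 + 2 * Re (cnj (c * vl \<Phi> a) * vl ((U^^t) z) a))"
    proof (intro sum_mono)
      fix t a
      have "vl ((U^^t) \<psi>) a = c * vl \<Phi> a + vl ((U^^t) z) a" by (simp add: psi_split)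
      thus "(cmod (c * vl \<Phi> a))^2 + 2 * Re (cnj (c * vl \<Phi> a) * vl ((U^^t) z) a)
          \<le> (cmod (vl ((U^^t) \<psi>) a))^2" by (simp only: sq_expand_ge)
    qed
    also have "(\<Sum>t<T. \<Sum>a\<in>F. (cmod (c * vl \<Phi> a))^2 + 2 * Re (cnj (c * vl \<Phi> a) * vl ((U^^t) z) a))
        = real T * B + 2 * (\<Sum>a\<in>F. Re (cnj (c * vl \<Phi> a) * (\<Sum>t<T. vl ((U^^t) z) a)))"
      by (simp add: sum.distrib B_def sum.swap[of _ F] sum_distrib_left Re_sum)
    also have "\<dots> = real T * R T"
    proof -
      have pt: "Re (w * (complex_of_real k * s)) = k * Re (w * s)" for w s k
        by (simp add: algebra_simps)
      have "(\<Sum>a\<in>F. Re (cnj (c * vl \<Phi> a) * vl ((1/real T) *\<^sub>R (\<Sum>t<T. (U^^t) z)) a))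
          = (1/real T) * (\<Sum>a\<in>F. Re (cnj (c * vl \<Phi> a) * (\<Sum>t<T. vl ((U^^t) z) a)))"
        by (simp add: vl_sum pt sum_distrib_left)
      thus ?thesis using T0 by (simp add: R_def algebra_simps)
    qed
    finally show ?thesis using T0 by (simp add: field_simps)
  qed
  have "B \<le> L"
    by (rule LIMSEQ_le[OF Rl lim]) (auto intro: exI[of _ 1] le)
  moreover have "B = (cmod (cinner \<Phi> \<psi>))^2 / (norm \<Phi>)^4 * (\<Sum>a\<in>F. (cmod (vl \<Phi> a))^2)"
  proof -
    have "cmod c = cmod (cinner \<Phi> \<psi>) / n2" using n2 by (simp add: c_def norm_divide)
    hence "(cmod c)^2 = (cmod (cinner \<Phi> \<psi>))^2 / (norm \<Phi>)^4"
      by (simp add: n2_def power_divide power_mult[symmetric])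
    thus ?thesis by (simp add: B_def norm_mult power_mult_distrib sum_distrib_left)
  qed
  ultimately show ?thesis by simp
qed



lemma infsum_fin_supp:
  fixes f :: "'a \<Rightarrow> 'b::{comm_monoid_add,t2_space}"
  assumes "finite S" "\<And>a. a \<notin> S \<Longrightarrow> f a = 0"
  shows "infsum f UNIV = sum f S"
proof -
  have "infsum f UNIV = infsum f S" by (rule infsum_cong_neutral) (use assms in auto)
  thus ?thesis using assms by simp
qed

lemma l2s_fin_supp:
  assumes "finite S" "\<And>a. a \<notin> S \<Longrightarrow> f a = 0"
  shows "l2s f"
proof -
  have "(\<lambda>a. (cmod (f a))^2) summable_on S" using assms(1) by simp
  moreover have "(\<lambda>a. (cmod (f a))^2) summable_on S \<longleftrightarrow> (\<lambda>a. (cmod (f a))^2) summable_on UNIV"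
    by (rule summable_on_cong_neutral) (use assms in auto)
  ultimately show ?thesis unfolding l2s_def by simp
qed

locale bd =
  fixes p q r :: "nat \<Rightarrow> real"
  assumes nonneg: "\<And>j. p j \<ge> 0 \<and> q j \<ge> 0 \<and> r j \<ge> 0"
    and sum1: "\<And>j. p j + q j + r j = 1"
    and q0: "q 0 = 0"
    and ppos: "\<And>j. p j > 0"
    and qpos: "\<And>j. j \<ge> 1 \<Longrightarrow> q j > 0"
    and pos_rec: "summable (\<lambda>n. wgt p q (Suc n))"
begin

definition arcs :: "nat \<Rightarrow> arc set" where "arcs j = {b. origin b = j \<and> inA r b}"

lemma arcs_cases: "arcs j = {Rarc j} \<union> (if 1 \<le> j then {Larc j} else {}) \<union> (if 0 < r j then {Oarc j} else {})"
  by (rule set_eqI, case_tac x) (auto simp: arcs_def)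

lemma finite_arcs[simp]: "finite (arcs j)"
  by (simp add: arcs_cases)

lemma sum_arcs: "(\<Sum>b\<in>arcs j. f b) = f (Rarc j) + (if 1 \<le> j then f (Larc j) else 0) + (if 0 < r j then f (Oarc j) else 0)"
  by (cases "1 \<le> j"; cases "0 < r j") (simp_all add: arcs_cases algebra_simps)

lemma in_arcs: "b \<in> arcs j \<longleftrightarrow> origin b = j \<and> inA r b"
  by (simp add: arcs_def)

abbreviation cf :: "arc \<Rightarrow> real" where "cf \<equiv> coef p q r"

lemma cf_nonneg: "cf b \<ge> 0"
  using nonneg by (cases b) auto

lemma cf_sq: "(cf b)^2 = (case b of Rarc j \<Rightarrow> p j | Larc j \<Rightarrow> q j | Oarc j \<Rightarrow> r j)"
  using nonneg by (cases b) auto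

lemma cf_sq_sum: "(\<Sum>b\<in>arcs j. (cf b)^2) = 1"
proof -
  have "(\<Sum>b\<in>arcs j. (cf b)^2) = p j + (if 1 \<le> j then q j else 0) + (if 0 < r j then r j else 0)"
    by (simp add: sum_arcs cf_sq)
  also have "\<dots> = p j + q j + r j"
    using q0 nonneg[of j] by (cases "j = 0") (auto simp: less_eq_real_def)
  finally show ?thesis using sum1 by simp
qed

lemma avec_eq: "avec p q r j b = (if b \<in> arcs j then complex_of_real (cf b) else 0)"
  by (simp add: avec_def arcs_def)

lemma in_l2_iff: "in_l2 r f \<longleftrightarrow> (\<forall>a. \<not> inA r a \<longrightarrow> f a = 0) \<and> l2s f"
  by (simp add: in_l2_def l2s_def)

lemma l2_inner_ci: "l2_inner f g = ci f g"
  by (simp add: l2_inner_def ci_def)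

lemma l2_norm_nsq: "l2_norm f = sqrt (nsq f)"
  by (simp add: l2_norm_def nsq_def)

lemma l2s_avec: "l2s (avec p q r j)"
  by (rule l2s_fin_supp[of "arcs j"]) (auto simp: avec_eq)

definition supp :: "arc l2 \<Rightarrow> bool" where "supp x \<longleftrightarrow> (\<forall>a. \<not> inA r a \<longrightarrow> vl x a = 0)"

definition loc :: "nat \<Rightarrow> arc l2 \<Rightarrow> complex" where
  "loc j x = (\<Sum>b\<in>arcs j. complex_of_real (cf b) * vl x b)"

definition av :: "nat \<Rightarrow> arc l2" where "av j = mkl2 (avec p q r j)"

lemma vl_av: "vl (av j) = avec p q r j"
  using l2s_avec by (simp add: av_def mkl2_inverse)

lemma cinner_av: "cinner (av j) x = loc j x"
proof -
  have "cinner (av j) x = ci (avec p q r j) (vl x)" by (simp add: cinner.rep_eq vl_av)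
  also have "\<dots> = (\<Sum>b\<in>arcs j. cnj (avec p q r j b) * vl x b)"
    unfolding ci_def by (rule infsum_fin_supp) (auto simp: avec_eq)
  also have "\<dots> = loc j x" unfolding loc_def by (rule sum.cong) (auto simp: avec_eq)
  finally show ?thesis .
qed

definition lform :: "arc l2 \<Rightarrow> bool" where
  "lform x \<longleftrightarrow> (\<forall>b. vl x b = (if inA r b then complex_of_real (cf b) * loc (origin b) x else 0))"

lemma loc_cont: assumes "X \<longlonglongrightarrow> x" shows "(\<lambda>n. loc j (X n)) \<longlonglongrightarrow> loc j x"
  unfolding loc_def by (intro tendsto_intros coord_tendsto assms)

lemma closed_lform: "closed {x. lform x}"
  unfolding closed_sequential_limits
proof (intro allI impI, elim conjE)
  fix X x assume X: "\<forall>n. X n \<in> {x. lform x}" and lim: "X \<longlonglongrightarrow> x"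
  show "x \<in> {x. lform x}" unfolding mem_Collect_eq lform_def
  proof
    fix b
    have "(\<lambda>n. vl (X n) b) \<longlonglongrightarrow> vl x b" by (rule coord_tendsto[OF lim])
    moreover have "(\<lambda>n. vl (X n) b) \<longlonglongrightarrow> (if inA r b then complex_of_real (cf b) * loc (origin b) x else 0)"
    proof -
      have "(\<lambda>n. vl (X n) b) = (\<lambda>n. if inA r b then complex_of_real (cf b) * loc (origin b) (X n) else 0)"
        using X unfolding lform_def by auto
      thus ?thesis by (auto intro!: tendsto_intros loc_cont lim)
    qed
    ultimately show "vl x b = (if inA r b then complex_of_real (cf b) * loc (origin b) x else 0)"
      by (rule LIMSEQ_unique)
  qed
qed

end


lemma vl_mk: "l2s f \<Longrightarrow> vl (mkl2 f) = f"
  by (simp add: mkl2_inverse)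

lemma mk_vl[simp]: "mkl2 (vl x) = x"
  by (rule vl_inverse)

lemma norm_cs: "norm (cs c x) = cmod c * norm x"
proof -
  have "nsq (vl (cs c x)) = (cmod c)^2 * nsq (vl x)"
    unfolding nsq_def by (simp add: norm_mult power_mult_distrib infsum_cmult_right')
  hence "(norm (cs c x))^2 = (cmod c)^2 * (norm x)^2" by (simp only: nsq_vec)
  hence "(norm (cs c x))^2 = (cmod c * norm x)^2" by (simp add: power_mult_distrib)
  thus ?thesis by (simp add: power2_eq_iff_nonneg)
qed

lemma cs_diff: "cs c (x - y) = cs c x - cs c y"
  by transfer (simp add: algebra_simps)

lemma cs_cs: "cs a (cs b x) = cs (a * b) x"
  by transfer (simp add: algebra_simps)

lemma cs_one[simp]: "cs 1 x = x"
  by transfer simp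

context bd
begin

lemma loc_add: "loc j (x + y) = loc j x + loc j y"
  by (simp add: loc_def algebra_simps sum.distrib)

lemma loc_cs: "loc j (cs c x) = c * loc j x"
  by (simp add: loc_def sum_distrib_left algebra_simps)

lemma lform_add: "lform x \<Longrightarrow> lform y \<Longrightarrow> lform (x + y)"
  unfolding lform_def by (simp add: loc_add algebra_simps)

lemma lform_cs: "lform x \<Longrightarrow> lform (cs c x)"
  unfolding lform_def by (simp add: loc_cs algebra_simps)

lemma lform_zero: "lform 0"
  unfolding lform_def loc_def by simp

lemma loc_av: "loc i (av j) = (if i = j then 1 else 0)"
proof -
  have "loc i (av j) = (\<Sum>b\<in>arcs i. complex_of_real (cf b) * (if b \<in> arcs j then complex_of_real (cf b) else 0))"
    by (simp add: loc_def vl_av avec_eq)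
  also have "\<dots> = (if i = j then (\<Sum>b\<in>arcs i. complex_of_real ((cf b)^2)) else 0)"
    by (auto simp: in_arcs power2_eq_square intro!: sum.neutral)
  also have "\<dots> = (if i = j then 1 else 0)"
    by (simp only: of_real_sum[symmetric] cf_sq_sum) simp
  finally show ?thesis .
qed

lemma lform_av: "lform (av j)"
  unfolding lform_def by (auto simp: vl_av avec_eq loc_av in_arcs)

lemma lform_supp: "lform x \<Longrightarrow> supp x"
  unfolding lform_def supp_def by simp

definition M :: "arc l2 set" where
  "M = {x. \<exists>F c. finite F \<and> x = (\<Sum>j\<in>F. cs (c j) (av j))}"

definition SC :: "arc l2 set" where "SC = closure M"

lemma lform_comb: "finite F \<Longrightarrow> lform (\<Sum>j\<in>F. cs (c j) (av j))"
  by (induction F rule: finite_induct) (simp_all add: lform_zero lform_add lform_cs lform_av)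

lemma M_lform: "M \<subseteq> {x. lform x}"
  unfolding M_def using lform_comb by blast

lemma SC_lform: "x \<in> SC \<Longrightarrow> lform x"
  using closure_minimal[OF M_lform closed_lform] SC_def by blast

lemma cs_add_left: "cs (a + b) x = cs a x + cs b x"
  by transfer (simp add: algebra_simps)

lemma M_add: "x \<in> M \<Longrightarrow> y \<in> M \<Longrightarrow> x + y \<in> M"
proof -
  assume "x \<in> M" "y \<in> M"
  then obtain F c G d where F: "finite F" "x = (\<Sum>j\<in>F. cs (c j) (av j))"
    and G: "finite G" "y = (\<Sum>j\<in>G. cs (d j) (av j))" unfolding M_def by blast
  define c' where "c' j = (if j \<in> F then c j else 0)" for j
  define d' where "d' j = (if j \<in> G then d j else 0)" for j
  have fu: "finite (F \<union> G)" using F G by simp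
  have "(\<Sum>j\<in>F \<union> G. cs (c' j + d' j) (av j)) = (\<Sum>j\<in>F \<union> G. cs (c' j) (av j)) + (\<Sum>j\<in>F \<union> G. cs (d' j) (av j))"
    by (simp add: cs_add_left sum.distrib)
  also have "(\<Sum>j\<in>F \<union> G. cs (c' j) (av j)) = (\<Sum>j\<in>F. cs (c' j) (av j))"
    by (rule sum.mono_neutral_right[OF fu]) (auto simp: c'_def)
  also have "\<dots> = x" unfolding F(2) by (rule sum.cong) (auto simp: c'_def)
  also have "(\<Sum>j\<in>F \<union> G. cs (d' j) (av j)) = (\<Sum>j\<in>G. cs (d' j) (av j))"
    by (rule sum.mono_neutral_right[OF fu]) (auto simp: d'_def)
  also have "\<dots> = y" unfolding G(2) by (rule sum.cong) (auto simp: d'_def)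
  finally have "x + y = (\<Sum>j\<in>F \<union> G. cs (c' j + d' j) (av j))" by simp
  thus ?thesis unfolding M_def using fu
    by (intro CollectI exI[of _ "F \<union> G"] exI[of _ "\<lambda>j. c' j + d' j"]) simp
qed

lemma cs_zero_right[simp]: "cs a 0 = 0"
  by transfer simp

lemma cs_sum: "cs a (\<Sum>j\<in>F. f j) = (\<Sum>j\<in>F. cs a (f j))"
  by (induction F rule: infinite_finite_induct) (simp_all add: cs_add)

lemma M_cs: "x \<in> M \<Longrightarrow> cs a x \<in> M"
proof -
  assume "x \<in> M"
  then obtain F c where F: "finite F" "x = (\<Sum>j\<in>F. cs (c j) (av j))" unfolding M_def by blast
  have "cs a x = (\<Sum>j\<in>F. cs (a * c j) (av j))"
    unfolding F(2) cs_sum by (simp add: cs_cs)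
  thus ?thesis unfolding M_def using F
    by (intro CollectI exI[of _ F] exI[of _ "\<lambda>j. a * c j"]) simp
qed

lemma M_zero: "0 \<in> M"
  unfolding M_def by (auto intro!: exI[of _ "{}"])

lemma av_M: "av j \<in> M"
  unfolding M_def by (auto intro!: exI[of _ "{j}"] exI[of _ "\<lambda>_. 1"])

lemma subspace_M: "subspace M"
  unfolding subspace_def using M_zero M_add M_cs by (auto simp: cs_scaleR)

lemma subspace_SC: "subspace SC"
  unfolding SC_def by (rule subspace_closure_gen[OF subspace_M])

lemma closed_SC: "closed SC"
  unfolding SC_def by simp

lemma SC_cs: assumes "x \<in> SC" shows "cs a x \<in> SC"
  unfolding SC_def closure_approachable
proof (intro allI impI)
  fix e :: real assume "e > 0"
  then obtain y where "y \<in> M" "dist y x < e / (cmod a + 1)"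
    using assms unfolding SC_def closure_approachable
    by (metis divide_pos_pos norm_ge_zero add_nonneg_pos zero_less_one)
  moreover have "dist (cs a y) (cs a x) = cmod a * dist y x"
    by (simp add: dist_norm cs_diff[symmetric] norm_cs)
  moreover have "cmod a * dist y x \<le> (cmod a + 1) * dist y x" by (simp add: mult_right_mono)
  moreover have "(cmod a + 1) * dist y x < e" using \<open>dist y x < e / (cmod a + 1)\<close>
    by (simp add: pos_less_divide_eq mult.commute add_nonneg_pos)
  ultimately show "\<exists>z\<in>M. dist z (cs a x) < e" using M_cs by (intro bexI[of _ "cs a y"]) auto
qed

lemma SC_add: "x \<in> SC \<Longrightarrow> y \<in> SC \<Longrightarrow> x + y \<in> SC"
  using subspace_SC by (simp add: subspace_add)

lemma SC_diff: "x \<in> SC \<Longrightarrow> y \<in> SC \<Longrightarrow> x - y \<in> SC"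
  using subspace_SC by (simp add: subspace_diff)

lemma av_SC: "av j \<in> SC"
  using av_M closure_subset SC_def by blast

lemma proj_SC: "\<exists>y\<in>SC. \<forall>v\<in>SC. cinner v (x - y) = 0"
proof -
  obtain y where y: "y \<in> SC" "\<forall>v\<in>SC. inner v (x - y) = 0"
    using proj_exists[OF subspace_SC closed_SC] by blast
  have "cinner v (x - y) = 0" if "v \<in> SC" for v
    using y(2) that SC_cs[OF that, of \<i>] by (simp add: cinner_via_inner)
  thus ?thesis using y(1) by blast
qed

lemma proj_uniq:
  assumes "p1 \<in> SC" "\<forall>v\<in>SC. cinner v (x - p1) = 0" "p2 \<in> SC" "\<forall>v\<in>SC. cinner v (x - p2) = 0"
  shows "p1 = p2"
proof -
  have v: "p1 - p2 \<in> SC" using assms by (simp add: SC_diff)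
  have "cinner (p1 - p2) (p1 - p2) = cinner (p1 - p2) (x - p2) - cinner (p1 - p2) (x - p1)"
    by (simp add: cinner_diff_right)
  also have "\<dots> = 0" using assms v by simp
  finally have "(norm (p1 - p2))^2 = 0" by (simp add: cinner_self)
  thus ?thesis by simp
qed

definition PP :: "arc l2 \<Rightarrow> arc l2" where
  "PP x = (THE y. y \<in> SC \<and> (\<forall>v\<in>SC. cinner v (x - y) = 0))"

lemma PP: "PP x \<in> SC" "\<forall>v\<in>SC. cinner v (x - PP x) = 0"
proof -
  have "\<exists>!p. p \<in> SC \<and> (\<forall>v\<in>SC. cinner v (x - p) = 0)"
    using proj_SC proj_uniq by blast
  from theI'[OF this] show "PP x \<in> SC" "\<forall>v\<in>SC. cinner v (x - PP x) = 0"
    unfolding PP_def by blast+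
qed

lemma PP_eqI: "y \<in> SC \<Longrightarrow> \<forall>v\<in>SC. cinner v (x - y) = 0 \<Longrightarrow> PP x = y"
  using proj_uniq PP by blast

lemma PP_add: "PP (x + y) = PP x + PP y"
  by (rule PP_eqI) (use PP[of x] PP[of y] in \<open>auto simp: SC_add cinner_diff_right cinner_add_right\<close>)

lemma PP_cs: "PP (cs c x) = cs c (PP x)"
proof (rule PP_eqI)
  show "cs c (PP x) \<in> SC" using PP(1) by (rule SC_cs)
  show "\<forall>v\<in>SC. cinner v (cs c x - cs c (PP x)) = 0"
    using PP(2)[of x] by (simp add: cs_diff[symmetric] cinner_cs_right)
qed

lemma PP_SC: "x \<in> SC \<Longrightarrow> PP x = x"
  by (rule PP_eqI) auto

lemma dist_vl: "l2s \<phi> \<Longrightarrow> dist y (mkl2 \<phi>) = sqrt (nsq (\<lambda>a. \<phi> a - vl y a))"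
proof -
  assume l: "l2s \<phi>"
  have "dist y (mkl2 \<phi>) = norm (mkl2 \<phi> - y)" by (metis dist_commute dist_norm)
  also have "\<dots> = sqrt (nsq (\<lambda>a. \<phi> a - vl y a))" using l by (simp add: norm_l2_vec vl_mk)
  finally show ?thesis .
qed

lemma closed_span_iff: "\<phi> \<in> closed_span_a p q r \<longleftrightarrow> l2s \<phi> \<and> mkl2 \<phi> \<in> SC"
proof
  assume a: "\<phi> \<in> closed_span_a p q r"
  hence l: "l2s \<phi>" by (simp add: closed_span_a_def in_l2_iff)
  have "mkl2 \<phi> \<in> closure M" unfolding closure_approachable
  proof (intro allI impI)
    fix e :: real assume "e > 0"
    then obtain F c where F: "finite F" "l2_norm (\<lambda>a. \<phi> a - (\<Sum>j\<in>F. c j * avec p q r j a)) < e"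
      using a unfolding closed_span_a_def by blast
    define y where "y = (\<Sum>j\<in>F. cs (c j) (av j))"
    have "y \<in> M" unfolding M_def y_def using F by blast
    moreover have "vl y = (\<lambda>a. \<Sum>j\<in>F. c j * avec p q r j a)"
      unfolding y_def by (rule ext) (simp add: vl_sum vl_av)
    hence "dist y (mkl2 \<phi>) = l2_norm (\<lambda>a. \<phi> a - (\<Sum>j\<in>F. c j * avec p q r j a))"
      using l by (simp add: dist_vl l2_norm_nsq)
    hence "dist y (mkl2 \<phi>) < e" using F(2) by linarith
    ultimately show "\<exists>y\<in>M. dist y (mkl2 \<phi>) < e" by blast
  qed
  thus "l2s \<phi> \<and> mkl2 \<phi> \<in> SC" using l SC_def by simp
next
  assume a: "l2s \<phi> \<and> mkl2 \<phi> \<in> SC"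
  hence "supp (mkl2 \<phi>)" using SC_lform lform_supp by blast
  hence ia: "in_l2 r \<phi>" using a by (simp add: supp_def in_l2_iff vl_mk)
  have "\<exists>F c. finite F \<and> l2_norm (\<lambda>a. \<phi> a - (\<Sum>j\<in>F. c j * avec p q r j a)) < e" if "e > 0" for e
  proof -
    obtain y where "y \<in> M" "dist y (mkl2 \<phi>) < e" using a \<open>e>0\<close> unfolding SC_def closure_approachable by blast
    then obtain F c where F: "finite F" "y = (\<Sum>j\<in>F. cs (c j) (av j))" "dist y (mkl2 \<phi>) < e"
      unfolding M_def by blast
    have "vl y = (\<lambda>a. \<Sum>j\<in>F. c j * avec p q r j a)"
      unfolding F(2) by (rule ext) (simp add: vl_sum vl_av)
    hence "dist y (mkl2 \<phi>) = l2_norm (\<lambda>a. \<phi> a - (\<Sum>j\<in>F. c j * avec p q r j a))"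
      using a by (simp add: dist_vl l2_norm_nsq)
    thus ?thesis using F by auto
  qed
  thus "\<phi> \<in> closed_span_a p q r" using ia unfolding closed_span_a_def by blast
qed

lemma projA_PP: assumes "l2s \<psi>" shows "projA p q r \<psi> = vl (PP (mkl2 \<psi>))"
proof -
  let ?x = "mkl2 \<psi>"
  have P: "vl (PP ?x) \<in> closed_span_a p q r \<and> (\<forall>v\<in>closed_span_a p q r. l2_inner v (\<lambda>a. \<psi> a - vl (PP ?x) a) = 0)"
  proof
    show "vl (PP ?x) \<in> closed_span_a p q r" using PP(1) by (simp add: closed_span_iff)
    show "\<forall>v\<in>closed_span_a p q r. l2_inner v (\<lambda>a. \<psi> a - vl (PP ?x) a) = 0"
    proof
      fix v assume "v \<in> closed_span_a p q r"
      hence v: "l2s v" "mkl2 v \<in> SC" by (auto simp: closed_span_iff)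
      have "l2_inner v (\<lambda>a. \<psi> a - vl (PP ?x) a) = cinner (mkl2 v) (?x - PP ?x)"
        using v assms by (simp add: l2_inner_ci cinner.rep_eq vl_mk)
      also have "\<dots> = 0" using PP(2) v by blast
      finally show "l2_inner v (\<lambda>a. \<psi> a - vl (PP ?x) a) = 0" .
    qed
  qed
  have U: "\<phi> = vl (PP ?x)" if "\<phi> \<in> closed_span_a p q r \<and> (\<forall>v\<in>closed_span_a p q r. l2_inner v (\<lambda>a. \<psi> a - \<phi> a) = 0)" for \<phi>
  proof -
    have ph: "l2s \<phi>" "mkl2 \<phi> \<in> SC" using that by (auto simp: closed_span_iff)
    have "\<forall>v\<in>SC. cinner v (?x - mkl2 \<phi>) = 0"
    proof
      fix v assume "v \<in> SC"
      hence "vl v \<in> closed_span_a p q r" by (simp add: closed_span_iff)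
      hence "l2_inner (vl v) (\<lambda>a. \<psi> a - \<phi> a) = 0" using that by blast
      thus "cinner v (?x - mkl2 \<phi>) = 0" using ph assms by (simp add: l2_inner_ci cinner.rep_eq vl_mk)
    qed
    hence "PP ?x = mkl2 \<phi>" using ph by (intro PP_eqI) auto
    thus ?thesis using ph by (simp add: vl_mk)
  qed
  show ?thesis unfolding projA_def by (rule the_equality, rule P, rule U, assumption)
qed

end


fun sig :: "arc \<Rightarrow> arc" where
  "sig (Rarc j) = Larc (Suc j)"
| "sig (Larc (Suc j)) = Rarc j"
| "sig (Larc 0) = Larc 0"
| "sig (Oarc j) = Oarc j"

lemma sig_sig[simp]: "sig (sig a) = a"
  by (cases a rule: sig.cases) auto

lemma bij_sig: "bij_betw sig UNIV UNIV"
  by (rule bij_betwI[of _ _ _ sig]) auto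

lemma shift_sig: "shift f a = (if a = Larc 0 then 0 else f (sig a))"
  by (cases a rule: sig.cases) auto

lemma l2s_comp_sig: "l2s f \<Longrightarrow> l2s (\<lambda>a. f (sig a))"
  unfolding l2s_def using summable_on_reindex_bij_betw[OF bij_sig, of "\<lambda>a. (cmod (f a))^2"] by simp

lemma nsq_comp_sig: "nsq (\<lambda>a. f (sig a)) = nsq f"
  unfolding nsq_def using infsum_reindex_bij_betw[OF bij_sig, of "\<lambda>a. (cmod (f a))^2"] by simp

lemma l2s_shift: assumes "l2s f" shows "l2s (shift f)"
  unfolding l2s_def
proof (rule summable_on_comparison_test)
  show "(\<lambda>a. (cmod (f (sig a)))^2) summable_on UNIV" using l2s_comp_sig[OF assms] by (simp add: l2s_def)
qed (auto simp: shift_sig)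

context bd
begin

lemma l2s_restr: "l2s f \<Longrightarrow> l2s (\<lambda>a. if inA r a then f a else 0)"
  unfolding l2s_def by (rule summable_on_comparison_test) auto

definition rA :: "arc l2 \<Rightarrow> arc l2" where
  "rA x = mkl2 (\<lambda>a. if inA r a then vl x a else 0)"

lemma vl_rA: "vl (rA x) a = (if inA r a then vl x a else 0)"
  unfolding rA_def by (subst vl_mk) (auto intro: l2s_restr)

definition shl :: "arc l2 \<Rightarrow> arc l2" where "shl x = mkl2 (shift (vl x))"

lemma vl_shl: "vl (shl x) = shift (vl x)"
  unfolding shl_def by (rule vl_mk[OF l2s_shift[OF l2s_vec]])

definition Cl :: "arc l2 \<Rightarrow> arc l2" where "Cl x = 2 *\<^sub>R PP x - x"

definition Ul :: "arc l2 \<Rightarrow> arc l2" where "Ul x = shl (Cl (rA x))"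

lemma rA_add: "rA (x + y) = rA x + rA y"
  by (rule l2_eqI) (simp add: vl_rA)
lemma rA_cs: "rA (cs c x) = cs c (rA x)"
  by (rule l2_eqI) (simp add: vl_rA)
lemma shl_add: "shl (x + y) = shl x + shl y"
  by (rule l2_eqI) (simp add: vl_shl shift_sig)
lemma shl_cs: "shl (cs c x) = cs c (shl x)"
  by (rule l2_eqI) (simp add: vl_shl shift_sig)
lemma Cl_add: "Cl (x + y) = Cl x + Cl y"
  by (simp add: Cl_def PP_add scaleR_add_right)
lemma Cl_cs: "Cl (cs c x) = cs c (Cl x)"
  by (simp add: Cl_def PP_cs cs_diff cs_scaleR cs_cs mult.commute)

lemma Ul_add: "Ul (x + y) = Ul x + Ul y"
  by (simp add: Ul_def rA_add Cl_add shl_add)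
lemma Ul_cs: "Ul (cs c x) = cs c (Ul x)"
  by (simp add: Ul_def rA_cs Cl_cs shl_cs)

lemma supp_rA: "supp (rA x)" by (simp add: supp_def vl_rA)

lemma supp_SC: "x \<in> SC \<Longrightarrow> supp x" using SC_lform lform_supp by blast

lemma supp_diff: "supp x \<Longrightarrow> supp y \<Longrightarrow> supp (x - y)" by (simp add: supp_def)
lemma supp_scaleR: "supp x \<Longrightarrow> supp (c *\<^sub>R x)" by (simp add: supp_def)

lemma supp_Cl: "supp x \<Longrightarrow> supp (Cl x)"
  unfolding Cl_def using supp_SC[OF PP(1)] by (intro supp_diff supp_scaleR)

lemma inA_sig: "inA r (sig a) \<longleftrightarrow> inA r a"
  by (cases a rule: sig.cases) auto

lemma supp_shl: "supp x \<Longrightarrow> supp (shl x)"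
  unfolding supp_def by (auto simp: vl_shl shift_sig inA_sig)

lemma supp_Ul: "supp (Ul x)"
  unfolding Ul_def by (intro supp_shl supp_Cl supp_rA)

lemma norm_shl: assumes "supp x" shows "norm (shl x) = norm x"
proof -
  have "vl (shl x) = (\<lambda>a. vl x (sig a))"
    using assms by (auto simp: vl_shl shift_sig supp_def)
  thus ?thesis by (simp add: norm_l2_vec nsq_comp_sig)
qed

lemma inner_PP: "inner (PP x) x = (norm (PP x))^2"
proof -
  have "cinner (PP x) (x - PP x) = 0" using PP by blast
  hence "inner (PP x) (x - PP x) = 0" by (simp add: inner_cinner)
  thus ?thesis by (simp add: inner_diff_right power2_norm_eq_inner)
qed

lemma norm_Cl: "norm (Cl x) = norm x"
proof -
  have "(norm (Cl x))^2 = (norm (2 *\<^sub>R PP x))^2 - 2 * inner (2 *\<^sub>R PP x) x + (norm x)^2"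
    unfolding Cl_def by (rule norm_diff_sq)
  also have "\<dots> = (norm x)^2" using inner_PP[of x] by (simp add: power_mult_distrib)
  finally show ?thesis by (simp add: power2_eq_iff_nonneg)
qed

lemma norm_rA: "norm (rA x) \<le> norm x"
proof -
  have "nsq (vl (rA x)) \<le> nsq (vl x)" unfolding nsq_def
    by (rule infsum_mono) (use l2s_vec[of "rA x"] l2s_vec[of x] in \<open>auto simp: l2s_def vl_rA\<close>)
  thus ?thesis by (simp add: norm_l2_vec)
qed

lemma norm_Ul: "norm (Ul x) \<le> norm x"
  unfolding Ul_def using norm_rA[of x] by (simp add: norm_shl supp_Cl supp_rA norm_Cl)

lemma Uop_Ul: assumes "in_l2 r \<psi>" shows "Uop p q r \<psi> = vl (Ul (mkl2 \<psi>))"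
proof -
  have l: "l2s \<psi>" and s: "\<And>a. \<not> inA r a \<Longrightarrow> \<psi> a = 0" using assms by (auto simp: in_l2_iff)
  have rA: "rA (mkl2 \<psi>) = mkl2 \<psi>" by (rule l2_eqI) (auto simp: vl_rA vl_mk[OF l] s)
  have "coin p q r \<psi> = vl (Cl (mkl2 \<psi>))"
    by (rule ext) (simp add: coin_def Cl_def projA_PP[OF l] vl_mk[OF l])
  thus ?thesis by (simp add: Uop_def Ul_def rA vl_shl)
qed

lemma in_l2_Ul: "in_l2 r (vl (Ul x))"
  using supp_Ul[of x] by (simp add: in_l2_iff supp_def)

lemma Uop_pow: assumes "in_l2 r \<psi>" shows "(Uop p q r ^^ t) \<psi> = vl ((Ul ^^ t) (mkl2 \<psi>))"
proof (induction t)
  case 0 thus ?case using assms by (simp add: in_l2_iff vl_mk)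
next
  case (Suc t)
  have "in_l2 r (vl ((Ul ^^ t) (mkl2 \<psi>)))"
  proof (cases t)
    case 0 thus ?thesis using assms by (simp add: in_l2_iff vl_mk)
  next
    case (Suc n) thus ?thesis using in_l2_Ul by simp
  qed
  thus ?case using Suc by (simp add: Uop_Ul)
qed

end


context bd
begin

abbreviation "CR \<equiv> C_R p q"
abbreviation "pis \<equiv> pi_stat p q"

lemma wgt_pos: "wgt p q j > 0"
proof -
  have "(\<Prod>k<j. p k) > 0" using ppos by (intro prod_pos) auto
  moreover have "(\<Prod>k\<in>{1..j}. q k) > 0" using qpos by (intro prod_pos) auto
  ultimately show ?thesis by (simp add: wgt_def)
qed

lemma wgt_0: "wgt p q 0 = 1" by (simp add: wgt_def)

lemma wgt_Suc: "wgt p q (Suc j) * q (Suc j) = wgt p q j * p j"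
proof -
  have "{1..Suc j} = insert (Suc j) {1..j}" by auto
  hence "(\<Prod>k\<in>{1..Suc j}. q k) = q (Suc j) * (\<Prod>k\<in>{1..j}. q k)" by simp
  moreover have "q (Suc j) > 0" using qpos by simp
  ultimately show ?thesis by (simp add: wgt_def field_simps)
qed

lemma CR_nonneg: "CR \<ge> 0"
  unfolding C_R_def using pos_rec wgt_pos by (intro suminf_nonneg) (auto simp: less_imp_le)

lemma pis_eq: "pis j = wgt p q j / (1 + CR)"
  by (cases "j = 0") (simp_all add: pi_stat_def wgt_0)

lemma pis_pos: "pis j > 0"
  using wgt_pos CR_nonneg by (simp add: pis_eq)

lemma sum_pis_le: "(\<Sum>j\<le>n. pis j) \<le> 1"
proof -
  have "(\<Sum>j\<le>n. wgt p q j) = (\<Sum>j<Suc n. wgt p q j)" by (simp only: lessThan_Suc_atMost)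
  also have "\<dots> = wgt p q 0 + (\<Sum>j<n. wgt p q (Suc j))" by (rule sum.lessThan_Suc_shift)
  also have "(\<Sum>j<n. wgt p q (Suc j)) \<le> CR"
    unfolding C_R_def using pos_rec wgt_pos by (intro sum_le_suminf) (auto simp: less_imp_le)
  finally have "(\<Sum>j\<le>n. wgt p q j) \<le> 1 + CR" by (simp add: wgt_0)
  thus ?thesis using CR_nonneg by (simp add: pis_eq sum_divide_distrib[symmetric])
qed

definition Phf :: "arc \<Rightarrow> complex" where
  "Phf b = (if inA r b then complex_of_real (cf b * sqrt (pis (origin b))) else 0)"

lemma Phf_sq: "b \<in> arcs j \<Longrightarrow> (cmod (Phf b))^2 = (cf b)^2 * pis j"
  using pis_pos[of j] cf_nonneg[of b]
  by (simp add: Phf_def in_arcs norm_mult power_mult_distrib less_imp_le del: of_real_mult)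

lemma Phf_fin: "finite F \<Longrightarrow> (\<Sum>b\<in>F. (cmod (Phf b))^2) \<le> 1"
proof -
  assume fF: "finite F"
  define n where "n = Max (insert 0 (origin ` F))"
  define G where "G = (\<Union>j\<in>{..n}. arcs j)"
  have fG: "finite G" by (simp add: G_def)
  have "(\<Sum>b\<in>F. (cmod (Phf b))^2) \<le> (\<Sum>b\<in>F \<union> G. (cmod (Phf b))^2)"
    using fF fG by (intro sum_mono2) auto
  also have "\<dots> = (\<Sum>b\<in>G. (cmod (Phf b))^2)"
  proof (rule sum.mono_neutral_right)
    show "\<forall>b\<in>F \<union> G - G. (cmod (Phf b))^2 = 0"
    proof
      fix b assume b: "b \<in> F \<union> G - G"
      hence "origin b \<le> n" using fF by (auto simp: n_def)
      hence "\<not> inA r b" using b by (auto simp: G_def in_arcs)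
      thus "(cmod (Phf b))^2 = 0" by (simp add: Phf_def)
    qed
  qed (use fF fG in auto)
  also have "\<dots> = (\<Sum>j\<le>n. \<Sum>b\<in>arcs j. (cmod (Phf b))^2)"
    unfolding G_def by (rule sum.UNION_disjoint) (auto simp: in_arcs)
  also have "\<dots> = (\<Sum>j\<le>n. pis j)"
  proof (rule sum.cong[OF refl])
    fix j
    have "(\<Sum>b\<in>arcs j. (cmod (Phf b))^2) = (\<Sum>b\<in>arcs j. (cf b)^2 * pis j)"
      by (rule sum.cong) (auto simp: Phf_sq)
    also have "\<dots> = pis j" by (simp add: sum_distrib_right[symmetric] cf_sq_sum)
    finally show "(\<Sum>b\<in>arcs j. (cmod (Phf b))^2) = pis j" .
  qed
  also have "\<dots> \<le> 1" by (rule sum_pis_le)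
  finally show ?thesis .
qed

lemma l2s_Phf: "l2s Phf"
  unfolding l2s_def
  by (rule nonneg_bdd_above_summable_on) (use Phf_fin in \<open>auto simp: bdd_above_def\<close>)

lemma nsq_Phf: "nsq Phf \<le> 1"
  unfolding nsq_def by (rule infsum_le_finite_sums) (use l2s_Phf Phf_fin in \<open>auto simp: l2s_def\<close>)

definition Phi :: "arc l2" where "Phi = mkl2 Phf"

lemma vl_Phi: "vl Phi = Phf"
  by (simp add: Phi_def vl_mk l2s_Phf)

lemma norm_Phi_le: "norm Phi \<le> 1"
  using nsq_Phf by (simp add: norm_l2_vec vl_Phi)

lemma Phi_nz: "Phi \<noteq> 0"
proof
  assume "Phi = 0"
  hence "Phf (Rarc 0) = 0" by (metis vl_Phi zero_l2.rep_eq)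
  moreover have "cf (Rarc 0) * sqrt (pis 0) > 0" using ppos pis_pos by simp
  ultimately show False using ppos[of 0] pis_pos[of 0] by (simp add: Phf_def)
qed

lemma loc_Phi: "loc j Phi = complex_of_real (sqrt (pis j))"
proof -
  have "loc j Phi = (\<Sum>b\<in>arcs j. complex_of_real ((cf b)^2 * sqrt (pis j)))"
    unfolding loc_def vl_Phi by (rule sum.cong) (auto simp: Phf_def in_arcs power2_eq_square)
  also have "\<dots> = complex_of_real (sqrt (pis j))"
    by (simp only: of_real_sum[symmetric] sum_distrib_right[symmetric] cf_sq_sum) simp
  finally show ?thesis .
qed

lemma lform_Phi: "lform Phi"
  unfolding lform_def by (auto simp: vl_Phi loc_Phi Phf_def)

lemma lform_SC: assumes "lform x" shows "x \<in> SC"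
proof -
  define y where "y = x - PP x"
  have e: "x - PP x = x + cs (-1) (PP x)" by (rule l2_eqI) simp
  have ly: "lform y" unfolding y_def e
    by (rule lform_add[OF assms lform_cs[OF SC_lform[OF PP(1)]]])
  have "loc j y = 0" for j
  proof -
    have "loc j y = cinner (av j) y" by (simp add: cinner_av)
    also have "\<dots> = 0" unfolding y_def using PP(2) av_SC by blast
    finally show ?thesis .
  qed
  hence "vl y b = 0" for b using ly unfolding lform_def by simp
  hence "y = 0" by (intro l2_eqI) simp
  hence "x = PP x" unfolding y_def by simp
  thus ?thesis using PP(1)[of x] by metis
qed

lemma Phi_SC: "Phi \<in> SC" by (rule lform_SC[OF lform_Phi])

lemma Phf_sig: "Phf (sig a) = Phf a"
proof (cases a rule: sig.cases)
  case (1 j)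
  have "q (Suc j) * pis (Suc j) = p j * pis j"
    using wgt_Suc[of j] by (simp add: pis_eq field_simps)
  hence "sqrt (q (Suc j)) * sqrt (pis (Suc j)) = sqrt (p j) * sqrt (pis j)"
    by (metis real_sqrt_mult)
  thus ?thesis using 1 by (simp add: Phf_def)
next
  case (2 j)
  have "q (Suc j) * pis (Suc j) = p j * pis j"
    using wgt_Suc[of j] by (simp add: pis_eq field_simps)
  hence "sqrt (q (Suc j)) * sqrt (pis (Suc j)) = sqrt (p j) * sqrt (pis j)"
    by (metis real_sqrt_mult)
  thus ?thesis using 2 by (simp add: Phf_def)
qed auto

lemma Phf_L0: "Phf (Larc 0) = 0" by (simp add: Phf_def)

lemma shl_Phi: "shl Phi = Phi"
  by (rule l2_eqI) (simp add: vl_shl shift_sig vl_Phi Phf_sig Phf_L0)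

lemma supp_Phi: "supp Phi" by (simp add: supp_def vl_Phi Phf_def)

lemma rA_supp: "supp x \<Longrightarrow> rA x = x"
  by (rule l2_eqI) (simp add: vl_rA supp_def)

lemma Ul_Phi: "Ul Phi = Phi"
proof -
  have "Cl Phi = Phi" by (simp add: Cl_def PP_SC[OF Phi_SC] scaleR_2)
  thus ?thesis by (simp add: Ul_def rA_supp[OF supp_Phi] shl_Phi)
qed

lemma cinner_Phi_shl: "cinner Phi (shl y) = cinner Phi y"
proof -
  have "cinner Phi (shl y) = infsum (\<lambda>a. cnj (Phf (sig a)) * vl y (sig a)) UNIV"
    unfolding cinner.rep_eq ci_def vl_Phi vl_shl
    by (rule infsum_cong) (auto simp: shift_sig Phf_sig Phf_L0)
  also have "\<dots> = infsum (\<lambda>a. cnj (Phf a) * vl y a) UNIV"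
    by (rule infsum_reindex_bij_betw[OF bij_sig, of "\<lambda>a. cnj (Phf a) * vl y a"])
  also have "\<dots> = cinner Phi y" by (simp add: cinner.rep_eq ci_def vl_Phi)
  finally show ?thesis .
qed

lemma cinner_Phi_rA: "cinner Phi (rA y) = cinner Phi y"
  unfolding cinner.rep_eq ci_def vl_Phi
  by (rule infsum_cong) (auto simp: vl_rA Phf_def)

lemma cinner_Phi_Cl: "cinner Phi (Cl y) = cinner Phi y"
proof -
  have "cinner Phi (y - PP y) = 0" using PP(2) Phi_SC by blast
  hence e: "cinner Phi (PP y) = cinner Phi y" by (simp add: cinner_diff_right)
  have "cinner Phi (Cl y) = cinner Phi (cs 2 (PP y)) - cinner Phi y"
    unfolding Cl_def by (simp add: cinner_diff_right cs_scaleR)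
  also have "\<dots> = cinner Phi y" by (simp add: cinner_cs_right e)
  finally show ?thesis .
qed

lemma cinner_Phi_Ul: "cinner Phi (Ul w) = cinner Phi w"
  by (simp add: Ul_def cinner_Phi_shl cinner_Phi_Cl cinner_Phi_rA)

end


context bd
begin

lemma fix1: assumes Uy: "Ul y = y" shows "\<exists>k. y = cs k Phi"
proof -
  have sy: "supp y" using supp_Ul[of y] Uy by simp
  define al where "al = PP y"
  have yeq: "y = shl (Cl y)" using Uy by (simp add: Ul_def rA_supp[OF sy])
  have lal: "lform al" unfolding al_def by (rule SC_lform[OF PP(1)])
  define X where "X j = loc j y" for j
  have local: "loc j al = X j" for j
  proof -
    have "cinner (av j) (y - al) = 0" using PP(2) av_SC unfolding al_def by blast
    hence "cinner (av j) al = cinner (av j) y" by (simp add: cinner_diff_right)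
    thus ?thesis by (simp add: cinner_av X_def)
  qed
  have val: "vl al b = (if inA r b then complex_of_real (cf b) * X (origin b) else 0)" for b
    using lal unfolding lform_def by (simp add: local)
  have vY: "vl y a = (if a = Larc 0 then 0 else 2 * vl al (sig a) - vl y (sig a))" for a
  proof -
    have "vl y a = vl (shl (Cl y)) a" using yeq by simp
    thus ?thesis by (simp add: vl_shl shift_sig Cl_def al_def)
  qed
  define sp where "sp j = complex_of_real (sqrt (p j))" for j
  define sq where "sq j = complex_of_real (sqrt (q j))" for j
  have sp_sq: "sp j * sp j = complex_of_real (p j)" for j
    using nonneg[of j] by (simp add: sp_def of_real_mult[symmetric] del: of_real_mult)
  have sq_sq: "sq j * sq j = complex_of_real (q j)" for j
    using nonneg[of j] by (simp add: sq_def of_real_mult[symmetric] del: of_real_mult)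
  have sp0: "sp j \<noteq> 0" for j using ppos[of j] by (simp add: sp_def)
  have sq0: "j \<ge> 1 \<Longrightarrow> sq j \<noteq> 0" for j using qpos[of j] by (simp add: sq_def)
  have hR: "vl y (Rarc j) = 2 * sq (Suc j) * X (Suc j) - vl y (Larc (Suc j))" for j
    using vY[of "Rarc j"] by (simp add: val sq_def)
  have hL: "vl y (Larc (Suc j)) = 2 * sp j * X j - vl y (Rarc j)" for j
    using vY[of "Larc (Suc j)"] by (simp add: val sp_def)
  have hO: "complex_of_real (sqrt (r j)) * vl y (Oarc j) = complex_of_real (r j) * X j" for j
  proof (cases "r j > 0")
    case True
    have "vl y (Oarc j) = complex_of_real (sqrt (r j)) * X j"
      using vY[of "Oarc j"] True by (simp add: val)
    thus ?thesis using True
      by (simp add: of_real_mult[symmetric] mult.assoc[symmetric] del: of_real_mult)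
  next
    case False
    hence "r j = 0" using nonneg[of j] by simp
    thus ?thesis by simp
  qed
  have hX: "X j = sp j * vl y (Rarc j) + (if 1 \<le> j then sq j * vl y (Larc j) else 0) + complex_of_real (r j) * X j" for j
  proof -
    have "X j = sp j * vl y (Rarc j) + (if 1 \<le> j then sq j * vl y (Larc j) else 0)
        + (if 0 < r j then complex_of_real (sqrt (r j)) * vl y (Oarc j) else 0)"
      unfolding X_def loc_def sum_arcs by (simp add: sp_def sq_def)
    moreover have "(if 0 < r j then complex_of_real (sqrt (r j)) * vl y (Oarc j) else 0) = complex_of_real (r j) * X j"
      using hO[of j] nonneg[of j] by (cases "0 < r j") auto
    ultimately show ?thesis by simp
  qed
  define P where "P j \<longleftrightarrow> (if 1 \<le> j then sq j * vl y (Larc j) else 0) = complex_of_real (q j) * X j" for j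
  have step: "vl y (Rarc j) = sp j * X j \<and> vl y (Larc (Suc j)) = sp j * X j \<and> sq (Suc j) * X (Suc j) = sp j * X j"
    if "P j" for j
  proof -
    have "X j = sp j * vl y (Rarc j) + complex_of_real (q j) * X j + complex_of_real (r j) * X j"
      using hX[of j] that unfolding P_def by simp
    hence "sp j * vl y (Rarc j) = complex_of_real (1 - q j - r j) * X j" by (simp add: algebra_simps)
    also have "1 - q j - r j = p j" using sum1[of j] by simp
    finally have "sp j * vl y (Rarc j) = sp j * (sp j * X j)" by (simp add: sp_sq[symmetric] mult.assoc)
    hence R: "vl y (Rarc j) = sp j * X j" using sp0 by simp
    hence L: "vl y (Larc (Suc j)) = sp j * X j" using hL[of j] by simp
    have "sq (Suc j) * X (Suc j) = sp j * X j" using hR[of j] R L by (simp add: algebra_simps)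
    thus ?thesis using R L by simp
  qed
  have Pall: "P j" for j
  proof (induction j)
    case 0 show ?case using q0 by (simp add: P_def)
  next
    case (Suc j)
    note st = step[OF Suc]
    have "sq (Suc j) * vl y (Larc (Suc j)) = sq (Suc j) * (sq (Suc j) * X (Suc j))"
      using st by simp
    thus ?case unfolding P_def by (simp add: sq_sq[symmetric] mult.assoc)
  qed
  have YR: "vl y (Rarc j) = sp j * X j" for j using step[OF Pall] by simp
  have rec: "sq (Suc j) * X (Suc j) = sp j * X j" for j using step[OF Pall] by simp
  have YL: "vl y (Larc j) = sq j * X j" if "j \<ge> 1" for j
  proof -
    have "sq j * vl y (Larc j) = sq j * (sq j * X j)"
      using Pall[of j] that unfolding P_def by (simp add: sq_sq[symmetric] mult.assoc)
    thus ?thesis using sq0[OF that] by simp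
  qed
  have YO: "vl y (Oarc j) = complex_of_real (sqrt (r j)) * X j" if "r j > 0" for j
    using vY[of "Oarc j"] that by (simp add: val)
  define sw where "sw j = complex_of_real (sqrt (wgt p q j))" for j
  have Xw: "X j = X 0 * sw j" for j
  proof (induction j)
    case 0 thus ?case by (simp add: sw_def wgt_0)
  next
    case (Suc j)
    have "wgt p q (Suc j) * q (Suc j) = wgt p q j * p j" by (rule wgt_Suc)
    hence "sqrt (wgt p q (Suc j)) * sqrt (q (Suc j)) = sqrt (wgt p q j) * sqrt (p j)"
      by (metis real_sqrt_mult)
    hence ww: "sw (Suc j) * sq (Suc j) = sw j * sp j"
      by (simp add: sw_def sq_def sp_def of_real_mult[symmetric] del: of_real_mult)
    have "sq (Suc j) * X (Suc j) = sq (Suc j) * (X 0 * sw (Suc j))"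
      using rec[of j] Suc ww by (simp add: algebra_simps)
    thus ?case using sq0[of "Suc j"] by simp
  qed
  define k where "k = X 0 * complex_of_real (sqrt (1 + CR))"
  have "vl y b = vl (cs k Phi) b" for b
  proof -
    have cpos: "1 + CR > 0" using CR_nonneg by simp
    have sq_pis: "sqrt (pis j) * sqrt (1 + CR) = sqrt (wgt p q j)" for j
      using cpos by (simp add: pis_eq real_sqrt_divide)
    have Yb: "vl y b = (if inA r b then complex_of_real (cf b) * X (origin b) else 0)"
    proof (cases b)
      case (Rarc j) thus ?thesis by (simp add: YR sp_def)
    next
      case (Larc j) thus ?thesis using sy YL by (cases "1 \<le> j") (auto simp: sq_def supp_def)
    next
      case (Oarc j) thus ?thesis using sy YO by (cases "0 < r j") (auto simp: supp_def)
    qed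
    show ?thesis
    proof (cases "inA r b")
      case True
      have "vl (cs k Phi) b = k * complex_of_real (cf b * sqrt (pis (origin b)))"
        using True by (simp add: vl_Phi Phf_def del: of_real_mult)
      also have "\<dots> = X 0 * complex_of_real (cf b) * complex_of_real (sqrt (pis (origin b)) * sqrt (1 + CR))"
        by (simp add: k_def algebra_simps)
      also have "\<dots> = complex_of_real (cf b) * X (origin b)"
        by (simp add: sq_pis Xw[of "origin b"] sw_def algebra_simps)
      finally show ?thesis using Yb True by simp
    next
      case False thus ?thesis using Yb by (simp add: vl_Phi Phf_def)
    qed
  qed
  hence "y = cs k Phi" by (rule l2_eqI)
  thus ?thesis by blast
qed

end


context bd
begin

lemma sum_Phf_sq: "(\<Sum>a\<in>arcs i. (cmod (vl Phi a))^2) = pis i"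
proof -
  have "(\<Sum>a\<in>arcs i. (cmod (vl Phi a))^2) = (\<Sum>a\<in>arcs i. (cf a)^2 * pis i)"
    by (rule sum.cong) (auto simp: vl_Phi Phf_sq)
  also have "\<dots> = pis i" by (simp add: sum_distrib_right[symmetric] cf_sq_sum)
  finally show ?thesis .
qed

lemma main1:
  assumes sup0: "\<forall>a. \<Psi>0 a \<noteq> 0 \<longrightarrow> inA r a \<and> origin a = j"
  shows "\<exists>L. time_avg p q r \<Psi>0 i \<longlonglongrightarrow> L \<and>
           L \<ge> (cmod (l2_inner (avec p q r j) \<Psi>0))^2 * pis i * pis j"
proof -
  have z: "\<Psi>0 a = 0" if "a \<notin> arcs j" for a using sup0 that by (auto simp: in_arcs)
  have l: "l2s \<Psi>0" by (rule l2s_fin_supp[of "arcs j"]) (use z in auto)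
  have il: "in_l2 r \<Psi>0" using l sup0 by (auto simp: in_l2_iff)
  define \<psi> where "\<psi> = mkl2 \<Psi>0"
  have vpsi: "vl \<psi> = \<Psi>0" using l by (simp add: \<psi>_def vl_mk)
  have ta: "time_avg p q r \<Psi>0 i = (\<lambda>T. (\<Sum>t<T. \<Sum>a\<in>arcs i. (cmod (vl ((Ul^^t) \<psi>) a))^2) / real T)"
  proof -
    have eq: "{a. origin a = i \<and> inA r a} = arcs i" by (simp add: arcs_def)
    have pr: "probX p q r \<Psi>0 t i = (\<Sum>a\<in>arcs i. (cmod (vl ((Ul^^t) \<psi>) a))^2)" for t
      unfolding probX_def by (simp only: Uop_pow[OF il] \<psi>_def eq)
    show ?thesis by (rule ext) (simp only: time_avg_def pr)
  qed
  obtain L where lim: "(\<lambda>T. (\<Sum>t<T. \<Sum>a\<in>arcs i. (cmod (vl ((Ul^^t) \<psi>) a))^2) / real T) \<longlonglongrightarrow> L"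
    using avg_conv[OF Ul_add Ul_cs norm_Ul] by blast
  have low: "L \<ge> (cmod (cinner Phi \<psi>))^2 / (norm Phi)^4 * (\<Sum>a\<in>arcs i. (cmod (vl Phi a))^2)"
    by (rule avg_lower[OF Ul_add Ul_cs norm_Ul Ul_Phi cinner_Phi_Ul fix1 Phi_nz lim])
  have ci_eq: "cinner Phi \<psi> = complex_of_real (sqrt (pis j)) * l2_inner (avec p q r j) \<Psi>0"
  proof -
    have "cinner Phi \<psi> = (\<Sum>b\<in>arcs j. cnj (Phf b) * \<Psi>0 b)"
      unfolding cinner.rep_eq ci_def vl_Phi vpsi by (rule infsum_fin_supp) (use z in auto)
    also have "\<dots> = complex_of_real (sqrt (pis j)) * (\<Sum>b\<in>arcs j. cnj (avec p q r j b) * \<Psi>0 b)"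
      unfolding sum_distrib_left by (rule sum.cong) (auto simp: Phf_def avec_eq in_arcs)
    also have "(\<Sum>b\<in>arcs j. cnj (avec p q r j b) * \<Psi>0 b) = l2_inner (avec p q r j) \<Psi>0"
      unfolding l2_inner_def by (rule infsum_fin_supp[symmetric]) (auto simp: avec_eq)
    finally show ?thesis .
  qed
  have "(cmod (cinner Phi \<psi>))^2 = pis j * (cmod (l2_inner (avec p q r j) \<Psi>0))^2"
    using pis_pos[of j] by (simp add: ci_eq norm_mult power_mult_distrib less_imp_le)
  hence low2: "L \<ge> pis j * (cmod (l2_inner (avec p q r j) \<Psi>0))^2 / (norm Phi)^4 * pis i"
    using low by (simp add: sum_Phf_sq)
  have n4: "(norm Phi)^4 \<le> 1" "(norm Phi)^4 > 0"
    using norm_Phi_le Phi_nz by (simp_all add: power_le_one)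
  have "pis j * (cmod (l2_inner (avec p q r j) \<Psi>0))^2 * pis i
      \<le> pis j * (cmod (l2_inner (avec p q r j) \<Psi>0))^2 / (norm Phi)^4 * pis i"
  proof (rule mult_right_mono)
    show "pis j * (cmod (l2_inner (avec p q r j) \<Psi>0))^2 \<le> pis j * (cmod (l2_inner (avec p q r j) \<Psi>0))^2 / (norm Phi)^4"
    proof -
      have x0: "pis j * (cmod (l2_inner (avec p q r j) \<Psi>0))^2 \<ge> 0" using pis_pos[of j] by simp
      have "pis j * (cmod (l2_inner (avec p q r j) \<Psi>0))^2 * (norm Phi)^4 \<le> pis j * (cmod (l2_inner (avec p q r j) \<Psi>0))^2"
        by (rule mult_left_le[OF n4(1) x0])
      thus ?thesis by (simp add: pos_le_divide_eq[OF n4(2)])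
    qed
  qed (use pis_pos[of i] in simp)
  hence "L \<ge> (cmod (l2_inner (avec p q r j) \<Psi>0))^2 * pis i * pis j"
    using low2 by (simp add: algebra_simps)
  thus ?thesis using lim ta by auto
qed

lemma main2: "\<exists>L. time_avg p q r (avec p q r j) i \<longlonglongrightarrow> L \<and> L > 0"
proof -
  obtain L where L: "time_avg p q r (avec p q r j) i \<longlonglongrightarrow> L"
    "L \<ge> (cmod (l2_inner (avec p q r j) (avec p q r j)))^2 * pis i * pis j"
  proof -
    have "\<forall>a. avec p q r j a \<noteq> 0 \<longrightarrow> inA r a \<and> origin a = j" by (simp add: avec_def)
    from main1[OF this, of i] show ?thesis using that by blast
  qed
  have "l2_inner (avec p q r j) (avec p q r j) = (\<Sum>b\<in>arcs j. cnj (avec p q r j b) * avec p q r j b)"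
    unfolding l2_inner_def by (rule infsum_fin_supp) (auto simp: avec_eq)
  also have "\<dots> = (\<Sum>b\<in>arcs j. complex_of_real ((cf b)^2))"
    by (rule sum.cong) (auto simp: avec_eq power2_eq_square)
  also have "\<dots> = 1" by (simp only: of_real_sum[symmetric] cf_sq_sum) simp
  finally have "L \<ge> pis i * pis j" using L(2) by simp
  moreover have "pis i * pis j > 0" using pis_pos by simp
  ultimately show ?thesis using L(1) by auto
qed

end

theorem theorem1:
  fixes p q r :: "nat \<Rightarrow> real"
  assumes nonneg: "\<And>j. p j \<ge> 0 \<and> q j \<ge> 0 \<and> r j \<ge> 0"
    and sum1: "\<And>j. p j + q j + r j = 1"
    and q0: "q 0 = 0"
    and ppos: "\<And>j. p j > 0"
    and qpos: "\<And>j. j \<ge> 1 \<Longrightarrow> q j > 0"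
    and pos_rec: "summable (\<lambda>n. wgt p q (Suc n))"
  shows "(\<forall>j \<Psi>0 i. (\<forall>a. \<Psi>0 a \<noteq> 0 \<longrightarrow> inA r a \<and> origin a = j) \<and> l2_norm \<Psi>0 = 1 \<longrightarrow>
           (\<exists>L. time_avg p q r \<Psi>0 i \<longlonglongrightarrow> L \<and>
                L \<ge> (cmod (l2_inner (avec p q r j) \<Psi>0))^2 * pi_stat p q i * pi_stat p q j))
       \<and> (\<forall>j i. \<exists>L. time_avg p q r (avec p q r j) i \<longlonglongrightarrow> L \<and> L > 0)"
proof -
  interpret bd p q r by (rule bd.intro) (fact assms)+
  show ?thesis
  proof (intro conjI allI impI)
    fix j \<Psi>0 i
    assume a: "(\<forall>a. \<Psi>0 a \<noteq> 0 \<longrightarrow> inA r a \<and> origin a = j) \<and> l2_norm \<Psi>0 = 1"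
    show "\<exists>L. time_avg p q r \<Psi>0 i \<longlonglongrightarrow> L \<and>
                L \<ge> (cmod (l2_inner (avec p q r j) \<Psi>0))^2 * pi_stat p q i * pi_stat p q j"
      by (rule main1) (use a in blast)
  next
    fix j i show "\<exists>L. time_avg p q r (avec p q r j) i \<longlonglongrightarrow> L \<and> L > 0" by (rule main2)
  qed
qed


end
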